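(* Let $\Bbbk$ be a field of characteristic $0$, $B=\bigoplus_{s=1}^N\Bbbk e_s$ ($N\ge2$), and let $(A,\{\!\{-,-\}\!\},\Phi)$ be a quasi-Hamiltonian algebra over $B$ with $\Phi=\sum_s\Phi_s$, $\Phi_s\in e_sAe_s$. Let $A^f$ be the fusion algebra obtained by fusing $e_2$ onto $e_1$ with double bracket $\{\!\{-,-\}\!\}^f=\{\!\{-,-\}\!\}_{ind}+\{\!\{-,-\}\!\}_{fus}$, and set $\operatorname{Tr}(\Phi_s)=\epsilon\Phi_s\epsilon$ for $s\ne2$, $\operatorname{Tr}(\Phi_2)=e_{12}\Phi_2e_{21}$. Then for every $s\ne1,2$ and every $a\in A^f$, $$\{\!\{\operatorname{Tr}(\Phi_s),a\}\!\}^f=\tfrac12\big(ae_s\otimes\operatorname{Tr}(\Phi_s)+a\operatorname{Tr}(\Phi_s)\otimes e_s-e_s\otimes\operatorname{Tr}(\Phi_s)a-\operatorname{Tr}(\Phi_s)\otimes e_sa\big),$$ and, setting $\Phi^f_1=\operatorname{Tr}(\Phi_1)\operatorname{Tr}(\Phi_2)$, for every $a\in A^f$, $$\{\!\{\Phi^f_1,a\}\!\}^f=\tfrac12\big(ae_1\otimes\Phi^f_1+a\Phi^f_1\otimes e_1-e_1\otimes\Phi^f_1a-\Phi^f_1\otimes e_1a\big).$$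
   Context: Conventions: $\otimes=\otimes_\Bbbk$; Sweedler notation $d=d'\otimes d''$; outer bimodule structure $b(a_1\otimes a_2)c=ba_1\otimes a_2c$. A $B$-linear double bracket is a $\Bbbk$-bilinear map $A\times A\to A\otimes A$ vanishing when an argument lies in $B$, with $\{\!\{a,b\}\!\}=-\{\!\{b,a\}\!\}''\otimes\{\!\{b,a\}\!\}'$ and $\{\!\{a,bc\}\!\}=\{\!\{a,b\}\!\}c+b\{\!\{a,c\}\!\}$. With $\tau(a_1\otimes a_2\otimes a_3)=a_3\otimes a_1\otimes a_2$, its triple bracket is $\{\!\{a,b,c\}\!\}=\{\!\{a,\{\!\{b,c\}\!\}'\}\!\}\otimes\{\!\{b,c\}\!\}''+\tau\{\!\{b,\{\!\{c,a\}\!\}'\}\!\}\otimes\{\!\{c,a\}\!\}''+\tau^2\{\!\{c,\{\!\{a,b\}\!\}'\}\!\}\otimes\{\!\{a,b\}\!\}''$; it is quasi-Poisson if $\{\!\{a,b,c\}\!\}=\frac14\sum_s(ce_sa\otimes e_sb\otimes e_s-ce_sa\otimes e_s\otimes be_s-ce_s\otimes ae_sb\otimes e_s+ce_s\otimes ae_s\otimes be_s-e_sa\otimes e_sb\otimes e_sc+e_sa\otimes e_s\otimes be_sc+e_s\otimes ae_sb\otimes e_sc-e_s\otimes ae_s\otimes be_sc)$. Quasi-Hamiltonian: quasi-Poisson with invertible $\Phi=\sum_s\Phi_s$, $\Phi_s\in e_sAe_s$, and $\{\!\{\Phi_s,a\}\!\}=\frac12(ae_s\otimes\Phi_s-e_s\otimes\Phi_sa+a\Phi_s\otimes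 e_s-\Phi_s\otimes e_sa)$ for all $a,s$. Fusion: $\mu=1-e_1-e_2$; $\mathrm{Mat}_2(\Bbbk)$ with matrix units $e_{11}=e_1,e_{12},e_{21},e_{22}=e_2$; $\bar A=A*_{\Bbbk e_1\oplus\Bbbk e_2\oplus\Bbbk\mu}(\mathrm{Mat}_2(\Bbbk)\oplus\Bbbk\mu)$; $\epsilon=1-e_2$; $A^f=\epsilon\bar A\epsilon$. Generators of $A^f$: $t\in\epsilon A\epsilon$, $e_{12}u$ ($u\in e_2A\epsilon$), $ve_{21}$ ($v\in\epsilon Ae_2$), $e_{12}we_{21}$ ($w\in e_2Ae_2$), written $e_+\alpha e_-$. $\{\!\{e_+\alpha e_-,f_+\beta f_-\}\!\}_{ind}=f_+\{\!\{\alpha,\beta\}\!\}'e_-\otimes e_+\{\!\{\alpha,\beta\}\!\}''f_-$. $\operatorname{Tr}(E_1),\operatorname{Tr}(E_2)$ are the derivations $A^f\to A^f\otimes A^f$ with $\operatorname{Tr}(E_1)(t)=te_1\otimes e_1-e_1\otimes e_1t$, $\operatorname{Tr}(E_2)(t)=0$; $\operatorname{Tr}(E_1)(e_{12}u)=e_{12}ue_1\otimes e_1$, $\operatorname{Tr}(E_2)(e_{12}u)=-e_1\otimes e_{12}u$; $\operatorname{Tr}(E_1)(ve_{21})=-e_1\otimes e_1ve_{21}$, $\operatorname{Tr}(E_2)(ve_{21})=ve_{21}\otimes e_1$; $\operatorname{Tr}(E_1)(e_{12}we_{21})=0$, $\operatorname{Tr}(E_2)(e_{12}we_{21})=e_{12}we_{21}e_1\otimes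 e_1-e_1\otimes e_1e_{12}we_{21}$; and $\{\!\{a,b\}\!\}_{fus}=-\frac12\operatorname{Tr}(E_2)(b)'\operatorname{Tr}(E_1)(a)''\otimes\operatorname{Tr}(E_1)(a)'\operatorname{Tr}(E_2)(b)''+\frac12\operatorname{Tr}(E_1)(b)'\operatorname{Tr}(E_2)(a)''\otimes\operatorname{Tr}(E_2)(a)'\operatorname{Tr}(E_1)(b)''$. *)

theory Defs
  imports Main
begin

definition kalg :: "('k::field \<Rightarrow> 'a::ring_1 \<Rightarrow> 'a) \<Rightarrow> bool" where
  "kalg sm \<longleftrightarrow> (\<forall>c x y. sm c (x + y) = sm c x + sm c y) \<and> (\<forall>c d x. sm (c + d) x = sm c x + sm d x)
     \<and> (\<forall>c d x. sm (c * d) x = sm c (sm d x)) \<and> (\<forall>x. sm 1 x = x)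
     \<and> (\<forall>c x y. sm c (x * y) = sm c x * y) \<and> (\<forall>c x y. sm c (x * y) = x * sm c y)"

definition bilin_form :: "('k::field \<Rightarrow> 'a::ring_1 \<Rightarrow> 'a) \<Rightarrow> ('a \<Rightarrow> 'a \<Rightarrow> 'k) \<Rightarrow> bool" where
  "bilin_form sm \<phi> \<longleftrightarrow> (\<forall>x x' y. \<phi> (x + x') y = \<phi> x y + \<phi> x' y) \<and> (\<forall>x y y'. \<phi> x (y + y') = \<phi> x y + \<phi> x y')
     \<and> (\<forall>c x y. \<phi> (sm c x) y = c * \<phi> x y) \<and> (\<forall>c x y. \<phi> x (sm c y) = c * \<phi> x y)"

definition trilin_form :: "('k::field \<Rightarrow> 'a::ring_1 \<Rightarrow> 'a) \<Rightarrow> ('a \<Rightarrow> 'a \<Rightarrow> 'a \<Rightarrow> 'k) \<Rightarrow> bool" where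
  "trilin_form sm \<phi> \<longleftrightarrow>
       (\<forall>x x' y z. \<phi> (x + x') y z = \<phi> x y z + \<phi> x' y z)
     \<and> (\<forall>x y y' z. \<phi> x (y + y') z = \<phi> x y z + \<phi> x y' z)
     \<and> (\<forall>x y z z'. \<phi> x y (z + z') = \<phi> x y z + \<phi> x y z')
     \<and> (\<forall>c x y z. \<phi> (sm c x) y z = c * \<phi> x y z) \<and> (\<forall>c x y z. \<phi> x (sm c y) z = c * \<phi> x y z)
     \<and> (\<forall>c x y z. \<phi> x y (sm c z) = c * \<phi> x y z)"

text \<open>An element of A \<otimes> A is represented by a finite list [(x_i,y_i)] meaning \<Sum> x_i \<otimes> y_i.
  Two such lists denote the same tensor iff every bilinear form A \<times> A \<rightarrow> k takes the same
  value on them (over a field the bilinear forms separate the points of A \<otimes> A).\<close>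
definition tens_eq :: "('k::field \<Rightarrow> 'a::ring_1 \<Rightarrow> 'a) \<Rightarrow> ('a \<times> 'a) list \<Rightarrow> ('a \<times> 'a) list \<Rightarrow> bool" where
  "tens_eq sm xs ys \<longleftrightarrow> (\<forall>\<phi>. bilin_form sm \<phi> \<longrightarrow>
      (\<Sum>(x, y)\<leftarrow>xs. \<phi> x y) = (\<Sum>(x, y)\<leftarrow>ys. \<phi> x y))"

definition tens3_eq :: "('k::field \<Rightarrow> 'a::ring_1 \<Rightarrow> 'a) \<Rightarrow> ('a \<times> 'a \<times> 'a) list \<Rightarrow> ('a \<times> 'a \<times> 'a) list \<Rightarrow> bool" where
  "tens3_eq sm xs ys \<longleftrightarrow> (\<forall>\<phi>. trilin_form sm \<phi> \<longrightarrow>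
      (\<Sum>(x, y, z)\<leftarrow>xs. \<phi> x y z) = (\<Sum>(x, y, z)\<leftarrow>ys. \<phi> x y z))"

definition base_ok :: "('k::field \<Rightarrow> 'a::ring_1 \<Rightarrow> 'a) \<Rightarrow> (nat \<Rightarrow> 'a) \<Rightarrow> nat \<Rightarrow> bool" where
  "base_ok sm e N \<longleftrightarrow> kalg sm \<and> (\<forall>s\<in>{1..N}. e s * e s = e s \<and> e s \<noteq> 0)
     \<and> (\<forall>s\<in>{1..N}. \<forall>t\<in>{1..N}. s \<noteq> t \<longrightarrow> e s * e t = 0) \<and> (\<Sum>s\<in>{1..N}. e s) = 1"

definition Bsub :: "('k::field \<Rightarrow> 'a::ring_1 \<Rightarrow> 'a) \<Rightarrow> (nat \<Rightarrow> 'a) \<Rightarrow> nat \<Rightarrow> 'a set" where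
  "Bsub sm e N = {(\<Sum>s\<in>{1..N}. sm (c s) (e s)) | c. True}"

text \<open>B-linear double bracket on A (values in A \<otimes> A, outer bimodule structure).\<close>
definition dbracket :: "('k::field \<Rightarrow> 'a::ring_1 \<Rightarrow> 'a) \<Rightarrow> (nat \<Rightarrow> 'a) \<Rightarrow> nat \<Rightarrow> ('a \<Rightarrow> 'a \<Rightarrow> ('a \<times> 'a) list) \<Rightarrow> bool" where
  "dbracket sm e N br \<longleftrightarrow>
       (\<forall>a a' b. tens_eq sm (br (a + a') b) (br a b @ br a' b))
     \<and> (\<forall>a b b'. tens_eq sm (br a (b + b')) (br a b @ br a b'))
     \<and> (\<forall>c a b. tens_eq sm (br (sm c a) b) (map (\<lambda>(x, y). (sm c x, y)) (br a b)))
     \<and> (\<forall>c a b. tens_eq sm (br a (sm c b)) (map (\<lambda>(x, y). (sm c x, y)) (br a b)))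
     \<and> (\<forall>a b. a \<in> Bsub sm e N \<or> b \<in> Bsub sm e N \<longrightarrow> tens_eq sm (br a b) [])
     \<and> (\<forall>a b. tens_eq sm (br a b) (map (\<lambda>(x, y). (- y, x)) (br b a)))
     \<and> (\<forall>a b c. tens_eq sm (br a (b * c))
            (map (\<lambda>(x, y). (x, y * c)) (br a b) @ map (\<lambda>(x, y). (b * x, y)) (br a c)))"

definition tau3 :: "'a \<times> 'a \<times> 'a \<Rightarrow> 'a \<times> 'a \<times> 'a" where
  "tau3 t = (case t of (x, y, z) \<Rightarrow> (z, x, y))"

definition tripbr :: "('a \<Rightarrow> 'a \<Rightarrow> ('a \<times> 'a) list) \<Rightarrow> 'a \<Rightarrow> 'a \<Rightarrow> 'a \<Rightarrow> ('a \<times> 'a \<times> 'a) list" where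
  "tripbr br a b c =
      concat (map (\<lambda>(x, y). map (\<lambda>(p, q). (p, q, y)) (br a x)) (br b c))
    @ map tau3 (concat (map (\<lambda>(x, y). map (\<lambda>(p, q). (p, q, y)) (br b x)) (br c a)))
    @ map (tau3 \<circ> tau3) (concat (map (\<lambda>(x, y). map (\<lambda>(p, q). (p, q, y)) (br c x)) (br a b)))"

definition qp_rhs :: "('k::field \<Rightarrow> 'a::ring_1 \<Rightarrow> 'a) \<Rightarrow> (nat \<Rightarrow> 'a) \<Rightarrow> nat \<Rightarrow> 'a \<Rightarrow> 'a \<Rightarrow> 'a \<Rightarrow> ('a \<times> 'a \<times> 'a) list" where
  "qp_rhs sm e N a b c = concat (map (\<lambda>s.
     [ (sm (1/4) (c * e s * a), e s * b, e s),
       (sm (-1/4) (c * e s * a), e s, b * e s),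
       (sm (-1/4) (c * e s), a * e s * b, e s),
       (sm (1/4) (c * e s), a * e s, b * e s),
       (sm (-1/4) (e s * a), e s * b, e s * c),
       (sm (1/4) (e s * a), e s, b * e s * c),
       (sm (1/4) (e s), a * e s * b, e s * c),
       (sm (-1/4) (e s), a * e s, b * e s * c) ]) [1..<Suc N])"

definition quasi_poisson :: "('k::field \<Rightarrow> 'a::ring_1 \<Rightarrow> 'a) \<Rightarrow> (nat \<Rightarrow> 'a) \<Rightarrow> nat \<Rightarrow> ('a \<Rightarrow> 'a \<Rightarrow> ('a \<times> 'a) list) \<Rightarrow> bool" where
  "quasi_poisson sm e N br \<longleftrightarrow> dbracket sm e N br \<and>
     (\<forall>a b c. tens3_eq sm (tripbr br a b c) (qp_rhs sm e N a b c))"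

definition quasi_hamiltonian :: "('k::field \<Rightarrow> 'a::ring_1 \<Rightarrow> 'a) \<Rightarrow> (nat \<Rightarrow> 'a) \<Rightarrow> nat \<Rightarrow> ('a \<Rightarrow> 'a \<Rightarrow> ('a \<times> 'a) list) \<Rightarrow> (nat \<Rightarrow> 'a) \<Rightarrow> bool" where
  "quasi_hamiltonian sm e N br \<Phi> \<longleftrightarrow> quasi_poisson sm e N br
     \<and> (\<forall>s\<in>{1..N}. \<Phi> s = e s * \<Phi> s * e s)
     \<and> (\<exists>\<psi>. (\<Sum>s\<in>{1..N}. \<Phi> s) * \<psi> = 1 \<and> \<psi> * (\<Sum>s\<in>{1..N}. \<Phi> s) = 1)
     \<and> (\<forall>s\<in>{1..N}. \<forall>a. tens_eq sm (br (\<Phi> s) a)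
          [ (sm (1/2) (a * e s), \<Phi> s), (sm (-1/2) (e s), \<Phi> s * a),
            (sm (1/2) (a * \<Phi> s), e s), (sm (-1/2) (\<Phi> s), e s * a) ])"

text \<open>Free (noncommutative, unital) k-algebra on the generators 'a + bool: finitely supported
  functions on words. Inl a is the generator [a] for a \<in> A, Inr True is e12, Inr False is e21.\<close>
type_synonym ('k, 'a) fel = "('a + bool) list \<Rightarrow> 'k"

definition fa_car :: "('k::field, 'a) fel set" where
  "fa_car = {f. finite {w. f w \<noteq> 0}}"

definition fa_add :: "('k::field, 'a) fel \<Rightarrow> ('k, 'a) fel \<Rightarrow> ('k, 'a) fel" where
  "fa_add f g = (\<lambda>w. f w + g w)"
definition fa_sub :: "('k::field, 'a) fel \<Rightarrow> ('k, 'a) fel \<Rightarrow> ('k, 'a) fel" where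
  "fa_sub f g = (\<lambda>w. f w - g w)"
definition fa_neg :: "('k::field, 'a) fel \<Rightarrow> ('k, 'a) fel" where
  "fa_neg f = (\<lambda>w. - f w)"
definition fa_sc :: "'k::field \<Rightarrow> ('k, 'a) fel \<Rightarrow> ('k, 'a) fel" where
  "fa_sc c f = (\<lambda>w. c * f w)"
definition fa_zero :: "('k::field, 'a) fel" where
  "fa_zero = (\<lambda>w. 0)"
definition fa_one :: "('k::field, 'a) fel" where
  "fa_one = (\<lambda>w. if w = [] then 1 else 0)"
definition fa_mul :: "('k::field, 'a) fel \<Rightarrow> ('k, 'a) fel \<Rightarrow> ('k, 'a) fel" where
  "fa_mul f g = (\<lambda>w. \<Sum>i\<le>length w. f (take i w) * g (drop i w))"
definition fa_gen :: "'a + bool \<Rightarrow> ('k::field, 'a) fel" where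
  "fa_gen x = (\<lambda>w. if w = [x] then 1 else 0)"

definition G :: "'a \<Rightarrow> ('k::field, 'a) fel" where "G a = fa_gen (Inl a)"
definition E12 :: "('k::field, 'a) fel" where "E12 = fa_gen (Inr True)"
definition E21 :: "('k::field, 'a) fel" where "E21 = fa_gen (Inr False)"

text \<open>Relations presenting Abar = A *_{k e1 + k e2 + k mu} (Mat_2(k) + k mu):
  A embeds as a unital k-algebra, and e12, e21 are the off-diagonal matrix units whose
  diagonal units are e1, e2 of A (so mu = 1 - e1 - e2 is identified automatically).\<close>
definition rels :: "('k::field \<Rightarrow> 'a::ring_1 \<Rightarrow> 'a) \<Rightarrow> (nat \<Rightarrow> 'a) \<Rightarrow> ('k, 'a) fel set" where
  "rels sm e =
      {fa_sub (G (a + b)) (fa_add (G a) (G b)) | a b. True}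
    \<union> {fa_sub (G (sm c a)) (fa_sc c (G a)) | c a. True}
    \<union> {fa_sub (G (a * b)) (fa_mul (G a) (G b)) | a b. True}
    \<union> {fa_sub (G 1) fa_one,
       fa_sub E12 (fa_mul (fa_mul (G (e 1)) E12) (G (e 2))),
       fa_sub E21 (fa_mul (fa_mul (G (e 2)) E21) (G (e 1))),
       fa_sub (fa_mul E12 E21) (G (e 1)),
       fa_sub (fa_mul E21 E12) (G (e 2))}"

inductive_set fa_ideal :: "('k::field, 'a) fel set \<Rightarrow> ('k, 'a) fel set" for R where
  zero: "fa_zero \<in> fa_ideal R"
| gen: "r \<in> R \<Longrightarrow> p \<in> fa_car \<Longrightarrow> q \<in> fa_car \<Longrightarrow> fa_mul (fa_mul p r) q \<in> fa_ideal R"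
| add: "x \<in> fa_ideal R \<Longrightarrow> y \<in> fa_ideal R \<Longrightarrow> fa_add x y \<in> fa_ideal R"

definition Ibar :: "('k::field \<Rightarrow> 'a::ring_1 \<Rightarrow> 'a) \<Rightarrow> (nat \<Rightarrow> 'a) \<Rightarrow> ('k, 'a) fel set" where
  "Ibar sm e = fa_ideal (rels sm e)"

definition bar_eq :: "('k::field \<Rightarrow> 'a::ring_1 \<Rightarrow> 'a) \<Rightarrow> (nat \<Rightarrow> 'a) \<Rightarrow> ('k, 'a) fel \<Rightarrow> ('k, 'a) fel \<Rightarrow> bool" where
  "bar_eq sm e f g \<longleftrightarrow> fa_sub f g \<in> Ibar sm e"

definition bar_form :: "('k::field \<Rightarrow> 'a::ring_1 \<Rightarrow> 'a) \<Rightarrow> (nat \<Rightarrow> 'a) \<Rightarrow> (('k, 'a) fel \<Rightarrow> ('k, 'a) fel \<Rightarrow> 'k) \<Rightarrow> bool" where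
  "bar_form sm e \<phi> \<longleftrightarrow>
       (\<forall>x\<in>fa_car. \<forall>x'\<in>fa_car. \<forall>y\<in>fa_car. \<phi> (fa_add x x') y = \<phi> x y + \<phi> x' y \<and> \<phi> y (fa_add x x') = \<phi> y x + \<phi> y x')
     \<and> (\<forall>c. \<forall>x\<in>fa_car. \<forall>y\<in>fa_car. \<phi> (fa_sc c x) y = c * \<phi> x y \<and> \<phi> y (fa_sc c x) = c * \<phi> y x)
     \<and> (\<forall>x\<in>Ibar sm e. \<forall>y\<in>fa_car. \<phi> x y = 0 \<and> \<phi> y x = 0)"

text \<open>Equality in Abar \<otimes> Abar (which contains A^f \<otimes> A^f).\<close>
definition bar_teq :: "('k::field \<Rightarrow> 'a::ring_1 \<Rightarrow> 'a) \<Rightarrow> (nat \<Rightarrow> 'a) \<Rightarrow>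
     (('k, 'a) fel \<times> ('k, 'a) fel) list \<Rightarrow> (('k, 'a) fel \<times> ('k, 'a) fel) list \<Rightarrow> bool" where
  "bar_teq sm e xs ys \<longleftrightarrow> (\<forall>\<phi>. bar_form sm e \<phi> \<longrightarrow>
      (\<Sum>(x, y)\<leftarrow>xs. \<phi> x y) = (\<Sum>(x, y)\<leftarrow>ys. \<phi> x y))"

definition epsb :: "(nat \<Rightarrow> 'a::ring_1) \<Rightarrow> ('k::field, 'a) fel" where
  "epsb e = fa_sub fa_one (G (e 2))"

definition Af :: "('k::field \<Rightarrow> 'a::ring_1 \<Rightarrow> 'a) \<Rightarrow> (nat \<Rightarrow> 'a) \<Rightarrow> ('k, 'a) fel set" where
  "Af sm e = {f \<in> fa_car. bar_eq sm e f (fa_mul (fa_mul (epsb e) f) (epsb e))}"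

definition fus_dbracket :: "('k::field \<Rightarrow> 'a::ring_1 \<Rightarrow> 'a) \<Rightarrow> (nat \<Rightarrow> 'a) \<Rightarrow>
     (('k, 'a) fel \<Rightarrow> ('k, 'a) fel \<Rightarrow> (('k, 'a) fel \<times> ('k, 'a) fel) list) \<Rightarrow> bool" where
  "fus_dbracket sm e F \<longleftrightarrow> (let A = Af sm e; teq = bar_teq sm e in
       (\<forall>a\<in>A. \<forall>b\<in>A. set (F a b) \<subseteq> A \<times> A)
     \<and> (\<forall>a\<in>A. \<forall>a'\<in>A. \<forall>b\<in>A. \<forall>b'\<in>A. bar_eq sm e a a' \<and> bar_eq sm e b b' \<longrightarrow> teq (F a b) (F a' b'))
     \<and> (\<forall>a\<in>A. \<forall>a'\<in>A. \<forall>b\<in>A. teq (F (fa_add a a') b) (F a b @ F a' b))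
     \<and> (\<forall>a\<in>A. \<forall>b\<in>A. \<forall>b'\<in>A. teq (F a (fa_add b b')) (F a b @ F a b'))
     \<and> (\<forall>c. \<forall>a\<in>A. \<forall>b\<in>A. teq (F (fa_sc c a) b) (map (\<lambda>(x, y). (fa_sc c x, y)) (F a b)))
     \<and> (\<forall>c. \<forall>a\<in>A. \<forall>b\<in>A. teq (F a (fa_sc c b)) (map (\<lambda>(x, y). (fa_sc c x, y)) (F a b)))
     \<and> (\<forall>a\<in>A. \<forall>b\<in>A. teq (F a b) (map (\<lambda>(x, y). (fa_neg y, x)) (F b a)))
     \<and> (\<forall>a\<in>A. \<forall>b\<in>A. \<forall>c\<in>A. teq (F a (fa_mul b c))
          (map (\<lambda>(x, y). (x, fa_mul y c)) (F a b) @ map (\<lambda>(x, y). (fa_mul b x, y)) (F a c))))"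

text \<open>Kinds of generators: t, e12 u, v e21, e12 w e21.\<close>
datatype gkind = KT | KU | KV | KW

definition epsA :: "(nat \<Rightarrow> 'a::ring_1) \<Rightarrow> 'a" where "epsA e = 1 - e 2"

definition gen_ok :: "(nat \<Rightarrow> 'a::ring_1) \<Rightarrow> gkind \<Rightarrow> 'a \<Rightarrow> bool" where
  "gen_ok e k \<alpha> = (case k of
       KT \<Rightarrow> \<alpha> = epsA e * \<alpha> * epsA e
     | KU \<Rightarrow> \<alpha> = e 2 * \<alpha> * epsA e
     | KV \<Rightarrow> \<alpha> = epsA e * \<alpha> * e 2
     | KW \<Rightarrow> \<alpha> = e 2 * \<alpha> * e 2)"

definition eplus :: "gkind \<Rightarrow> ('k::field, 'a) fel" where
  "eplus k = (case k of KT \<Rightarrow> fa_one | KV \<Rightarrow> fa_one | KU \<Rightarrow> E12 | KW \<Rightarrow> E12)"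
definition eminus :: "gkind \<Rightarrow> ('k::field, 'a) fel" where
  "eminus k = (case k of KT \<Rightarrow> fa_one | KU \<Rightarrow> fa_one | KV \<Rightarrow> E21 | KW \<Rightarrow> E21)"

definition gen_el :: "gkind \<Rightarrow> 'a \<Rightarrow> ('k::field, 'a) fel" where
  "gen_el k \<alpha> = fa_mul (fa_mul (eplus k) (G \<alpha>)) (eminus k)"

definition ind_br :: "('a \<Rightarrow> 'a \<Rightarrow> ('a \<times> 'a) list) \<Rightarrow> gkind \<Rightarrow> 'a \<Rightarrow> gkind \<Rightarrow> 'a
     \<Rightarrow> (('k::field, 'a) fel \<times> ('k, 'a) fel) list" where
  "ind_br br k1 \<alpha> k2 \<beta> = map (\<lambda>(x, y).
      (fa_mul (fa_mul (eplus k2) (G x)) (eminus k1), fa_mul (fa_mul (eplus k1) (G y)) (eminus k2))) (br \<alpha> \<beta>)"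

definition TrE1 :: "(nat \<Rightarrow> 'a) \<Rightarrow> gkind \<Rightarrow> 'a \<Rightarrow> (('k::field, 'a) fel \<times> ('k, 'a) fel) list" where
  "TrE1 e k \<alpha> = (let g = gen_el k \<alpha>; E1 = G (e 1) in case k of
       KT \<Rightarrow> [(fa_mul g E1, E1), (fa_neg E1, fa_mul E1 g)]
     | KU \<Rightarrow> [(fa_mul g E1, E1)]
     | KV \<Rightarrow> [(fa_neg E1, fa_mul E1 g)]
     | KW \<Rightarrow> [])"

definition TrE2 :: "(nat \<Rightarrow> 'a) \<Rightarrow> gkind \<Rightarrow> 'a \<Rightarrow> (('k::field, 'a) fel \<times> ('k, 'a) fel) list" where
  "TrE2 e k \<alpha> = (let g = gen_el k \<alpha>; E1 = G (e 1) in case k of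
       KT \<Rightarrow> []
     | KU \<Rightarrow> [(fa_neg E1, g)]
     | KV \<Rightarrow> [(g, E1)]
     | KW \<Rightarrow> [(fa_mul g E1, E1), (fa_neg E1, fa_mul E1 g)])"

definition fus_br :: "(nat \<Rightarrow> 'a) \<Rightarrow> gkind \<Rightarrow> 'a \<Rightarrow> gkind \<Rightarrow> 'a \<Rightarrow> (('k::field, 'a) fel \<times> ('k, 'a) fel) list" where
  "fus_br e k1 \<alpha> k2 \<beta> =
      concat (map (\<lambda>(p, q). map (\<lambda>(r, s). (fa_sc (-1/2) (fa_mul p s), fa_mul r q)) (TrE1 e k1 \<alpha>)) (TrE2 e k2 \<beta>))
    @ concat (map (\<lambda>(p, q). map (\<lambda>(r, s). (fa_sc (1/2) (fa_mul p s), fa_mul r q)) (TrE2 e k1 \<alpha>)) (TrE1 e k2 \<beta>))"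

definition TrPhi :: "(nat \<Rightarrow> 'a::ring_1) \<Rightarrow> (nat \<Rightarrow> 'a) \<Rightarrow> nat \<Rightarrow> ('k::field, 'a) fel" where
  "TrPhi e \<Phi> s = (if s = 2 then fa_mul (fa_mul E12 (G (\<Phi> 2))) E21
                   else fa_mul (fa_mul (epsb e) (G (\<Phi> s))) (epsb e))"

definition Phif1 :: "(nat \<Rightarrow> 'a::ring_1) \<Rightarrow> (nat \<Rightarrow> 'a) \<Rightarrow> ('k::field, 'a) fel" where
  "Phif1 e \<Phi> = fa_mul (TrPhi e \<Phi> 1) (TrPhi e \<Phi> 2)"

definition mom_rhs :: "('k::field, 'a) fel \<Rightarrow> ('k, 'a) fel \<Rightarrow> ('k, 'a) fel \<Rightarrow> (('k, 'a) fel \<times> ('k, 'a) fel) list" where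
  "mom_rhs E P a = [ (fa_sc (1/2) (fa_mul a E), P), (fa_sc (1/2) (fa_mul a P), E),
                     (fa_sc (-1/2) E, fa_mul P a), (fa_sc (-1/2) P, fa_mul E a) ]"

end

theory Submission
  imports Defs
begin

lemma fa_mul_Nil: "fa_mul f g [] = f [] * g []"
  by (simp add: fa_mul_def)

lemma fa_mul_Cons: "fa_mul f g (a # w) = f [] * g (a # w) + fa_mul (\<lambda>u. f (a # u)) g w"
  unfolding fa_mul_def by (simp only: length_Cons sum.atMost_Suc_shift) simp

lemma fa_mul_addl: "fa_mul (\<lambda>u. p u + q u) h w = fa_mul p h w + fa_mul q h w"
  unfolding fa_mul_def by (simp add: sum.distrib distrib_right)

lemma fa_mul_scl: "fa_mul (\<lambda>u. c * p u) h w = c * fa_mul p h w"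
  unfolding fa_mul_def by (simp add: sum_distrib_left mult.assoc)

lemma fa_mul_assoc_pt: "fa_mul (fa_mul f g) h w = fa_mul f (fa_mul g h) w"
proof (induction w arbitrary: f)
  case Nil then show ?case by (simp add: fa_mul_Nil mult.assoc)
next
  case (Cons a w)
  have e: "(\<lambda>u. fa_mul f g (a # u)) = (\<lambda>u. f [] * g (a # u) + fa_mul (\<lambda>u. f (a # u)) g u)"
    by (simp add: fa_mul_Cons)
  show ?case
    by (simp add: fa_mul_Cons e fa_mul_addl fa_mul_scl Cons.IH fa_mul_Nil distrib_left mult.assoc)
qed

lemma fa_mul_assoc: "fa_mul (fa_mul f g) h = fa_mul f (fa_mul g h)"
  using fa_mul_assoc_pt by blast


lemma fa_mul_one_left: "fa_mul fa_one f = f"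
proof
  fix w show "fa_mul fa_one f w = f w"
    by (cases w) (simp_all add: fa_mul_Cons fa_mul_Nil fa_one_def, simp add: fa_mul_def)
qed

lemma fa_mul_one_right_pt: "fa_mul f fa_one w = f w"
  by (induction w arbitrary: f) (simp_all add: fa_mul_Cons fa_mul_Nil fa_one_def)

lemma fa_mul_one_right: "fa_mul f fa_one = f"
  using fa_mul_one_right_pt by blast

lemma fa_mul_add_right: "fa_mul (fa_add f g) h = fa_add (fa_mul f h) (fa_mul g h)"
  unfolding fa_mul_def fa_add_def by (simp add: sum.distrib distrib_right)
lemma fa_mul_add_left: "fa_mul h (fa_add f g) = fa_add (fa_mul h f) (fa_mul h g)"
  unfolding fa_mul_def fa_add_def by (simp add: sum.distrib distrib_left)
lemma fa_mul_sc_right: "fa_mul (fa_sc c f) g = fa_sc c (fa_mul f g)"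
  unfolding fa_mul_def fa_sc_def by (simp add: sum_distrib_left mult.assoc)
lemma fa_mul_sc_left: "fa_mul f (fa_sc c g) = fa_sc c (fa_mul f g)"
  unfolding fa_mul_def fa_sc_def by (simp add: sum_distrib_left mult.left_commute)
lemma fa_neg_sc: "fa_neg f = fa_sc (-1) f"
  unfolding fa_neg_def fa_sc_def by simp
lemma fa_sub_sc: "fa_sub f g = fa_add f (fa_sc (-1) g)"
  unfolding fa_sub_def fa_sc_def fa_add_def by simp
lemma fa_sc_sc: "fa_sc c (fa_sc d f) = fa_sc (c * d) f"
  unfolding fa_sc_def by (simp add: mult.assoc)
lemma fa_sc_add: "fa_sc c (fa_add f g) = fa_add (fa_sc c f) (fa_sc c g)"
  unfolding fa_sc_def fa_add_def by (simp add: distrib_left)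
lemma fa_sc_one: "fa_sc 1 f = f"
  unfolding fa_sc_def by simp
lemma fa_sc_zero: "fa_sc 0 f = fa_zero"
  unfolding fa_sc_def fa_zero_def by simp
lemma fa_mul_zero_left: "fa_mul fa_zero f = fa_zero"
  unfolding fa_mul_def fa_zero_def by simp
lemma fa_mul_zero_right: "fa_mul f fa_zero = fa_zero"
  unfolding fa_mul_def fa_zero_def by simp
lemma fa_add_zero: "fa_add fa_zero f = f" "fa_add f fa_zero = f"
  unfolding fa_add_def fa_zero_def by simp_all
lemma fa_add_comm: "fa_add f g = fa_add g f"
  unfolding fa_add_def by (simp add: add.commute)
lemma fa_add_assoc: "fa_add (fa_add f g) h = fa_add f (fa_add g h)"
  unfolding fa_add_def by (simp add: add.assoc)
lemma fa_mul_sub_right: "fa_mul (fa_sub f g) h = fa_sub (fa_mul f h) (fa_mul g h)"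
  by (simp add: fa_sub_sc fa_mul_add_right fa_mul_sc_right)
lemma fa_mul_sub_left: "fa_mul h (fa_sub f g) = fa_sub (fa_mul h f) (fa_mul h g)"
  by (simp add: fa_sub_sc fa_mul_add_left fa_mul_sc_left)

lemma car_iff: "f \<in> fa_car \<longleftrightarrow> finite {w. f w \<noteq> 0}" by (simp add: fa_car_def)

lemma car_add[simp]: "f \<in> fa_car \<Longrightarrow> g \<in> fa_car \<Longrightarrow> fa_add f g \<in> fa_car"
  unfolding car_iff fa_add_def
  by (rule finite_subset[of _ "{w. f w \<noteq> 0} \<union> {w. g w \<noteq> 0}"]) auto
lemma car_sc[simp]: "f \<in> fa_car \<Longrightarrow> fa_sc c f \<in> fa_car"
  unfolding car_iff fa_sc_def
  by (rule finite_subset[of _ "{w. f w \<noteq> 0}"]) auto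
lemma car_neg[simp]: "f \<in> fa_car \<Longrightarrow> fa_neg f \<in> fa_car"
  by (simp add: fa_neg_sc)
lemma car_sub[simp]: "f \<in> fa_car \<Longrightarrow> g \<in> fa_car \<Longrightarrow> fa_sub f g \<in> fa_car"
  by (simp add: fa_sub_sc)
lemma car_zero[simp]: "fa_zero \<in> fa_car"
  unfolding car_iff fa_zero_def by simp
lemma car_one[simp]: "fa_one \<in> fa_car"
  unfolding car_iff fa_one_def by simp
lemma car_gen[simp]: "fa_gen x \<in> fa_car"
  unfolding car_iff fa_gen_def by simp
lemma car_G[simp]: "G a \<in> fa_car" and car_E12[simp]: "E12 \<in> fa_car" and car_E21[simp]: "E21 \<in> fa_car"
  by (simp_all add: G_def E12_def E21_def)
lemma car_mul[simp]: assumes "f \<in> fa_car" "g \<in> fa_car" shows "fa_mul f g \<in> fa_car"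
proof -
  have "{w. fa_mul f g w \<noteq> 0} \<subseteq> (\<lambda>(u, v). u @ v) ` ({w. f w \<noteq> 0} \<times> {w. g w \<noteq> 0})"
  proof
    fix w assume "w \<in> {w. fa_mul f g w \<noteq> 0}"
    then obtain i where "f (take i w) * g (drop i w) \<noteq> 0"
      unfolding fa_mul_def by (auto elim: sum.not_neutral_contains_not_neutral)
    then show "w \<in> (\<lambda>(u, v). u @ v) ` ({w. f w \<noteq> 0} \<times> {w. g w \<noteq> 0})"
      by (auto intro!: image_eqI[of _ _ "(take i w, drop i w)"])
  qed
  then show ?thesis using assms unfolding car_iff by (meson finite_SigmaI finite_imageI finite_subset)
qed

lemma rels_car: "r \<in> rels sm e \<Longrightarrow> r \<in> fa_car"
  unfolding rels_def by auto

lemma Ibar_car: "x \<in> Ibar sm e \<Longrightarrow> x \<in> fa_car"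
  unfolding Ibar_def by (induction rule: fa_ideal.induct) (auto dest: rels_car)

lemma Ibar_zero[simp]: "fa_zero \<in> Ibar sm e"
  unfolding Ibar_def by (rule fa_ideal.zero)
lemma Ibar_add: "x \<in> Ibar sm e \<Longrightarrow> y \<in> Ibar sm e \<Longrightarrow> fa_add x y \<in> Ibar sm e"
  unfolding Ibar_def by (rule fa_ideal.add)
lemma Ibar_rel: "r \<in> rels sm e \<Longrightarrow> r \<in> Ibar sm e"
  unfolding Ibar_def using fa_ideal.gen[of r "rels sm e" fa_one fa_one]
  by (simp add: fa_mul_one_left fa_mul_one_right rels_car)
lemma Ibar_mull: assumes "p \<in> fa_car" "x \<in> Ibar sm e" shows "fa_mul p x \<in> Ibar sm e"
  using assms(2) unfolding Ibar_def
proof (induction rule: fa_ideal.induct)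
  case zero then show ?case by (simp add: fa_mul_zero_right fa_ideal.zero)
next
  case (gen r p' q) then show ?case
    using fa_ideal.gen[of r "rels sm e" "fa_mul p p'" q] assms(1) by (simp add: fa_mul_assoc)
next
  case (add x y) then show ?case by (simp add: fa_mul_add_left fa_ideal.add)
qed
lemma Ibar_mulr: assumes "q \<in> fa_car" "x \<in> Ibar sm e" shows "fa_mul x q \<in> Ibar sm e"
  using assms(2) unfolding Ibar_def
proof (induction rule: fa_ideal.induct)
  case zero then show ?case by (simp add: fa_mul_zero_left fa_ideal.zero)
next
  case (gen r p q') then show ?case
    using fa_ideal.gen[of r "rels sm e" p "fa_mul q' q"] assms(1) by (simp add: fa_mul_assoc)
next
  case (add x y) then show ?case by (simp add: fa_mul_add_right fa_ideal.add)
qed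
lemma Ibar_sc: "x \<in> Ibar sm e \<Longrightarrow> fa_sc c x \<in> Ibar sm e"
  using Ibar_mull[of "fa_sc c fa_one" x sm e] by (simp add: fa_mul_sc_right fa_mul_one_left)
lemma Ibar_sub: "x \<in> Ibar sm e \<Longrightarrow> y \<in> Ibar sm e \<Longrightarrow> fa_sub x y \<in> Ibar sm e"
  by (simp add: fa_sub_sc Ibar_add Ibar_sc)

lemma beq_refl[simp]: "bar_eq sm e x x"
  unfolding bar_eq_def fa_sub_def by (simp add: fa_zero_def[symmetric])
lemma beq_sym: "bar_eq sm e x y \<Longrightarrow> bar_eq sm e y x"
  unfolding bar_eq_def
  by (drule Ibar_sc[where c="-1"]) (simp add: fa_sub_def fa_sc_def)
lemma beq_trans: "bar_eq sm e x y \<Longrightarrow> bar_eq sm e y z \<Longrightarrow> bar_eq sm e x z"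
  unfolding bar_eq_def
  by (drule (1) Ibar_add) (simp add: fa_sub_def fa_add_def)
lemma beq_add: "bar_eq sm e x x' \<Longrightarrow> bar_eq sm e y y' \<Longrightarrow> bar_eq sm e (fa_add x y) (fa_add x' y')"
  unfolding bar_eq_def
  by (drule (1) Ibar_add) (simp add: fa_sub_def fa_add_def algebra_simps)
lemma beq_sc: "bar_eq sm e x x' \<Longrightarrow> bar_eq sm e (fa_sc c x) (fa_sc c x')"
  unfolding bar_eq_def
  by (drule Ibar_sc[where c=c]) (simp add: fa_sub_def fa_sc_def algebra_simps)
lemma beq_mul: assumes "bar_eq sm e x x'" "bar_eq sm e y y'" "x' \<in> fa_car" "y \<in> fa_car"
  shows "bar_eq sm e (fa_mul x y) (fa_mul x' y')"
proof -
  have "fa_sub (fa_mul x y) (fa_mul x' y') = fa_add (fa_mul (fa_sub x x') y) (fa_mul x' (fa_sub y y'))"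
    by (simp add: fa_mul_sub_left fa_mul_sub_right) (simp add: fa_sub_def fa_add_def)
  then show ?thesis using assms unfolding bar_eq_def
    by (simp add: Ibar_add Ibar_mull Ibar_mulr)
qed
lemma beq_car: "bar_eq sm e x y \<Longrightarrow> y \<in> fa_car \<Longrightarrow> x \<in> fa_car"
proof -
  assume "bar_eq sm e x y" "y \<in> fa_car"
  then have "fa_add (fa_sub x y) y \<in> fa_car" unfolding bar_eq_def by (simp add: Ibar_car)
  moreover have "fa_add (fa_sub x y) y = x" by (simp add: fa_sub_def fa_add_def)
  ultimately show ?thesis by simp
qed

lemma bf_add1: "bar_form sm e \<phi> \<Longrightarrow> x \<in> fa_car \<Longrightarrow> x' \<in> fa_car \<Longrightarrow> y \<in> fa_car \<Longrightarrow> \<phi> (fa_add x x') y = \<phi> x y + \<phi> x' y"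
  unfolding bar_form_def by blast
lemma bf_add2: "bar_form sm e \<phi> \<Longrightarrow> x \<in> fa_car \<Longrightarrow> x' \<in> fa_car \<Longrightarrow> y \<in> fa_car \<Longrightarrow> \<phi> y (fa_add x x') = \<phi> y x + \<phi> y x'"
  unfolding bar_form_def by blast
lemma bf_sc1: "bar_form sm e \<phi> \<Longrightarrow> x \<in> fa_car \<Longrightarrow> y \<in> fa_car \<Longrightarrow> \<phi> (fa_sc c x) y = c * \<phi> x y"
  unfolding bar_form_def by blast
lemma bf_sc2: "bar_form sm e \<phi> \<Longrightarrow> x \<in> fa_car \<Longrightarrow> y \<in> fa_car \<Longrightarrow> \<phi> y (fa_sc c x) = c * \<phi> y x"
  unfolding bar_form_def by blast
lemma bf_I1: "bar_form sm e \<phi> \<Longrightarrow> x \<in> Ibar sm e \<Longrightarrow> y \<in> fa_car \<Longrightarrow> \<phi> x y = 0"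
  unfolding bar_form_def by blast
lemma bf_I2: "bar_form sm e \<phi> \<Longrightarrow> x \<in> Ibar sm e \<Longrightarrow> y \<in> fa_car \<Longrightarrow> \<phi> y x = 0"
  unfolding bar_form_def by blast
lemma bf_beq1: assumes "bar_form sm e \<phi>" "bar_eq sm e x x'" "x \<in> fa_car" "x' \<in> fa_car" "y \<in> fa_car"
  shows "\<phi> x y = \<phi> x' y"
proof -
  have "x = fa_add x' (fa_sub x x')" by (simp add: fa_sub_def fa_add_def)
  then have "\<phi> x y = \<phi> x' y + \<phi> (fa_sub x x') y" using assms by (metis bf_add1 car_sub)
  then show ?thesis using assms bf_I1 unfolding bar_eq_def by fastforce
qed
lemma bf_beq2: assumes "bar_form sm e \<phi>" "bar_eq sm e x x'" "x \<in> fa_car" "x' \<in> fa_car" "y \<in> fa_car"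
  shows "\<phi> y x = \<phi> y x'"
proof -
  have "x = fa_add x' (fa_sub x x')" by (simp add: fa_sub_def fa_add_def)
  then have "\<phi> y x = \<phi> y x' + \<phi> y (fa_sub x x')" using assms by (metis bf_add2 car_sub)
  then show ?thesis using assms bf_I2 unfolding bar_eq_def by fastforce
qed

definition lmap :: "('k::field \<Rightarrow> 'a::ring_1 \<Rightarrow> 'a) \<Rightarrow> (nat \<Rightarrow> 'a) \<Rightarrow> (('k, 'a) fel \<Rightarrow> ('k, 'a) fel) \<Rightarrow> bool" where
  "lmap sm e L \<longleftrightarrow> (\<forall>x\<in>fa_car. L x \<in> fa_car) \<and> (\<forall>x\<in>fa_car. \<forall>y\<in>fa_car. L (fa_add x y) = fa_add (L x) (L y))
     \<and> (\<forall>c. \<forall>x\<in>fa_car. L (fa_sc c x) = fa_sc c (L x)) \<and> (\<forall>x\<in>Ibar sm e. L x \<in> Ibar sm e)"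

lemma lmap_id: "lmap sm e (\<lambda>x. x)" unfolding lmap_def by simp
lemma lmap_mull: "p \<in> fa_car \<Longrightarrow> lmap sm e (\<lambda>x. fa_mul p x)"
  unfolding lmap_def by (simp add: fa_mul_add_left fa_mul_sc_left Ibar_mull)
lemma lmap_mulr: "p \<in> fa_car \<Longrightarrow> lmap sm e (\<lambda>x. fa_mul x p)"
  unfolding lmap_def by (simp add: fa_mul_add_right fa_mul_sc_right Ibar_mulr)
lemma lmap_neg: "lmap sm e (\<lambda>x. fa_neg x)"
  unfolding lmap_def by (simp add: fa_neg_sc fa_sc_add fa_sc_sc Ibar_sc mult.commute)
lemma lmap_comp: "lmap sm e L \<Longrightarrow> lmap sm e L' \<Longrightarrow> lmap sm e (\<lambda>x. L (L' x))"
  unfolding lmap_def by simp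

lemma bf_comp: assumes "bar_form sm e \<phi>" "lmap sm e L" "lmap sm e R"
  shows "bar_form sm e (\<lambda>x y. \<phi> (L x) (R y))"
  using assms unfolding bar_form_def lmap_def by (simp add: Ibar_car)
lemma bf_swap: assumes "bar_form sm e \<phi>"
  shows "bar_form sm e (\<lambda>x y. \<phi> y x)"
  using assms unfolding bar_form_def by simp


datatype 'a ltr = LG 'a | L12 | L21 | LI nat

fun ltv :: "(nat \<Rightarrow> 'a) \<Rightarrow> 'a ltr \<Rightarrow> ('k::field, 'a) fel" where
  "ltv e (LG a) = G a" | "ltv e L12 = E12" | "ltv e L21 = E21" | "ltv e (LI i) = G (e i)"

fun M :: "(nat \<Rightarrow> 'a) \<Rightarrow> 'a ltr list \<Rightarrow> ('k::field, 'a) fel" where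
  "M e [] = fa_one" | "M e (l # ls) = fa_mul (ltv e l) (M e ls)"

fun Mo :: "(nat \<Rightarrow> 'a) \<Rightarrow> 'a ltr list option \<Rightarrow> ('k::field, 'a) fel" where
  "Mo e None = fa_zero" | "Mo e (Some v) = M e v"

lemma ltv_car[simp]: "ltv e l \<in> fa_car" by (cases l) simp_all
lemma M_car[simp]: "M e xs \<in> fa_car" by (induction xs) simp_all
lemma Mo_car[simp]: "Mo e v \<in> fa_car" by (cases v) simp_all

lemma M_append: "M e (xs @ ys) = fa_mul (M e xs) (M e ys)"
  by (induction xs) (simp_all add: fa_mul_one_left fa_mul_assoc)

lemma M_single: "M e [l] = ltv e l" by (simp add: fa_mul_one_right)

lemma M_ctx: assumes "bar_eq sm e (M e u) (Mo e v)"
  shows "bar_eq sm e (M e (xs @ u @ ys)) (Mo e (map_option (\<lambda>v. xs @ v @ ys) v))"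
proof -
  have "bar_eq sm e (fa_mul (M e xs) (fa_mul (M e u) (M e ys))) (fa_mul (M e xs) (fa_mul (Mo e v) (M e ys)))"
    by (rule beq_mul[OF beq_refl beq_mul[OF assms beq_refl]]) simp_all
  then show ?thesis by (cases v) (simp_all add: M_append fa_mul_zero_left fa_mul_zero_right)
qed

lemma M_ctx': assumes "bar_eq sm e (M e u) (M e v)"
  shows "bar_eq sm e (M e (xs @ u @ ys)) (M e (xs @ v @ ys))"
  using M_ctx[of sm e u "Some v" xs ys] assms by simp

lemma beq_symI: "bar_eq sm e y x \<Longrightarrow> bar_eq sm e x y" by (rule beq_sym)

lemma rel_GG: "bar_eq sm e (fa_mul (G a) (G b)) (G (a * b))"
  unfolding bar_eq_def by (rule beq_symI[unfolded bar_eq_def], rule Ibar_rel) (unfold rels_def, blast)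
lemma rel_G1: "bar_eq sm e (G 1) fa_one"
  unfolding bar_eq_def by (rule Ibar_rel) (unfold rels_def, blast)
lemma rel_Gadd: "bar_eq sm e (G (a + b)) (fa_add (G a) (G b))"
  unfolding bar_eq_def by (rule Ibar_rel) (unfold rels_def, blast)
lemma rel_Gsc: "bar_eq sm e (G (sm c a)) (fa_sc c (G a))"
  unfolding bar_eq_def by (rule Ibar_rel) (unfold rels_def, blast)
lemma rel_E12: "bar_eq sm e E12 (fa_mul (fa_mul (G (e 1)) E12) (G (e 2)))"
  unfolding bar_eq_def by (rule Ibar_rel) (unfold rels_def, blast)
lemma rel_E21: "bar_eq sm e E21 (fa_mul (fa_mul (G (e 2)) E21) (G (e 1)))"
  unfolding bar_eq_def by (rule Ibar_rel) (unfold rels_def, blast)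
lemma rel_E12E21: "bar_eq sm e (fa_mul E12 E21) (G (e 1))"
  unfolding bar_eq_def by (rule Ibar_rel) (unfold rels_def, blast)
lemma rel_E21E12: "bar_eq sm e (fa_mul E21 E12) (G (e 2))"
  unfolding bar_eq_def by (rule Ibar_rel) (unfold rels_def, blast)
lemma rel_G0: "bar_eq sm e (G 0) fa_zero"
proof -
  have "fa_sub (G 0) (fa_add (G 0) (G 0)) \<in> Ibar sm e"
    using rel_Gadd[of sm e 0 0] by (simp add: bar_eq_def)
  then have "fa_sc (-1) (fa_sub (G 0) (fa_add (G 0) (G 0))) \<in> Ibar sm e" by (rule Ibar_sc)
  moreover have "fa_sc (-1) (fa_sub (G 0) (fa_add (G 0) (G 0))) = fa_sub (G 0) fa_zero"
    by (simp add: fa_sc_def fa_sub_def fa_add_def fa_zero_def)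
  ultimately show ?thesis unfolding bar_eq_def by metis
qed

lemma Mrel_GG: "bar_eq sm e (M e [LG a, LG b]) (M e [LG (a * b)])"
  using rel_GG by (simp add: fa_mul_one_right)
lemma Mrel_G1: "bar_eq sm e (M e [LG 1]) (M e [])"
  using rel_G1 by (simp add: fa_mul_one_right)
lemma Mrel_G0: "bar_eq sm e (M e [LG 0]) (Mo e None)"
  using rel_G0 by (simp add: fa_mul_one_right)
lemma Mrel_E12: "bar_eq sm e (M e [L12]) (M e [LG (e 1), L12, LG (e 2)])"
  using rel_E12 by (simp add: fa_mul_one_right fa_mul_assoc)
lemma Mrel_E21: "bar_eq sm e (M e [L21]) (M e [LG (e 2), L21, LG (e 1)])"
  using rel_E21 by (simp add: fa_mul_one_right fa_mul_assoc)
lemma Mrel_E12E21: "bar_eq sm e (M e [L12, L21]) (M e [LG (e 1)])"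
  using rel_E12E21 by (simp add: fa_mul_one_right)
lemma Mrel_E21E12: "bar_eq sm e (M e [L21, L12]) (M e [LG (e 2)])"
  using rel_E21E12 by (simp add: fa_mul_one_right)

lemma Mrel_E12E12: assumes "e 2 * e 1 = 0"
  shows "bar_eq sm e (M e [L12, L12]) (Mo e None)"
proof -
  have 1: "bar_eq sm e (M e [L12, L12]) (M e [LG (e 1), L12, LG (e 2), L12])"
    using M_ctx'[OF Mrel_E12, where xs="[]" and ys="[L12]"] by simp
  have 2: "bar_eq sm e (M e [LG (e 1), L12, LG (e 2), L12]) (M e [LG (e 1), L12, LG (e 2), LG (e 1), L12, LG (e 2)])"
    using M_ctx'[OF Mrel_E12, where xs="[LG (e 1), L12, LG (e 2)]" and ys="[]"] by simp
  have 3: "bar_eq sm e (M e [LG (e 1), L12, LG (e 2), LG (e 1), L12, LG (e 2)]) (M e [LG (e 1), L12, LG (e 2 * e 1), L12, LG (e 2)])"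
    using M_ctx'[OF Mrel_GG, where xs="[LG (e 1), L12]" and ys="[L12, LG (e 2)]"] by simp
  have 4: "bar_eq sm e (M e [LG (e 1), L12, LG 0, L12, LG (e 2)]) (Mo e None)"
    using M_ctx[OF Mrel_G0, where xs="[LG (e 1), L12]" and ys="[L12, LG (e 2)]"] by simp
  show ?thesis using 1 2 3 4 assms by (metis beq_trans)
qed

lemma Mrel_E21E21: assumes "e 1 * e 2 = 0"
  shows "bar_eq sm e (M e [L21, L21]) (Mo e None)"
proof -
  have 1: "bar_eq sm e (M e [L21, L21]) (M e [LG (e 2), L21, LG (e 1), L21])"
    using M_ctx'[OF Mrel_E21, where xs="[]" and ys="[L21]"] by simp
  have 2: "bar_eq sm e (M e [LG (e 2), L21, LG (e 1), L21]) (M e [LG (e 2), L21, LG (e 1), LG (e 2), L21, LG (e 1)])"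
    using M_ctx'[OF Mrel_E21, where xs="[LG (e 2), L21, LG (e 1)]" and ys="[]"] by simp
  have 3: "bar_eq sm e (M e [LG (e 2), L21, LG (e 1), LG (e 2), L21, LG (e 1)]) (M e [LG (e 2), L21, LG (e 1 * e 2), L21, LG (e 1)])"
    using M_ctx'[OF Mrel_GG, where xs="[LG (e 2), L21]" and ys="[L21, LG (e 1)]"] by simp
  have 4: "bar_eq sm e (M e [LG (e 2), L21, LG 0, L21, LG (e 1)]) (Mo e None)"
    using M_ctx[OF Mrel_G0, where xs="[LG (e 2), L21]" and ys="[L21, LG (e 1)]"] by simp
  show ?thesis using 1 2 3 4 assms by (metis beq_trans)
qed


definition eok :: "(nat \<Rightarrow> 'a::ring_1) \<Rightarrow> bool" where
  "eok e \<longleftrightarrow> e 1 * e 1 = e 1 \<and> e 2 * e 2 = e 2 \<and> e 2 * e 1 = 0 \<and> e 1 * e 2 = 0"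

lemma ltv_LI: "ltv e (LI i) = ltv e (LG (e i))" by simp

lemma M_LI: "M e (xs @ LI i # ys) = M e (xs @ LG (e i) # ys)"
  by (simp add: M_append)

lemma Mrel_GI: "bar_eq sm e (M e [LG a, LI i]) (Mo e (Some [LG (a * e i)]))"
  using Mrel_GG[of sm e a "e i"] by (simp add: M.simps)
lemma Mrel_IG: "bar_eq sm e (M e [LI i, LG b]) (Mo e (Some [LG (e i * b)]))"
  using Mrel_GG[of sm e "e i" b] by (simp add: M.simps)
lemma Mrel_II: "bar_eq sm e (M e [LI i, LI j]) (Mo e (Some [LG (e i * e j)]))"
  using Mrel_GG[of sm e "e i" "e j"] by (simp add: M.simps)

lemma absR12: "bar_eq sm e (M e [L12, LG c]) (M e [LG (e 1), L12, LG (e 2 * c)])"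
proof -
  have 1: "bar_eq sm e (M e [L12, LG c]) (M e [LG (e 1), L12, LG (e 2), LG c])"
    using M_ctx'[OF Mrel_E12, where xs="[]" and ys="[LG c]"] by simp
  have 2: "bar_eq sm e (M e [LG (e 1), L12, LG (e 2), LG c]) (M e [LG (e 1), L12, LG (e 2 * c)])"
    using M_ctx'[OF Mrel_GG, where xs="[LG (e 1), L12]" and ys="[]"] by simp
  show ?thesis using beq_trans[OF 1 2] .
qed
lemma absL12: "bar_eq sm e (M e [LG c, L12]) (M e [LG (c * e 1), L12, LG (e 2)])"
proof -
  have 1: "bar_eq sm e (M e [LG c, L12]) (M e [LG c, LG (e 1), L12, LG (e 2)])"
    using M_ctx'[OF Mrel_E12, where xs="[LG c]" and ys="[]"] by simp
  have 2: "bar_eq sm e (M e [LG c, LG (e 1), L12, LG (e 2)]) (M e [LG (c * e 1), L12, LG (e 2)])"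
    using M_ctx'[OF Mrel_GG, where xs="[]" and ys="[L12, LG (e 2)]"] by simp
  show ?thesis using beq_trans[OF 1 2] .
qed
lemma absR21: "bar_eq sm e (M e [L21, LG c]) (M e [LG (e 2), L21, LG (e 1 * c)])"
proof -
  have 1: "bar_eq sm e (M e [L21, LG c]) (M e [LG (e 2), L21, LG (e 1), LG c])"
    using M_ctx'[OF Mrel_E21, where xs="[]" and ys="[LG c]"] by simp
  have 2: "bar_eq sm e (M e [LG (e 2), L21, LG (e 1), LG c]) (M e [LG (e 2), L21, LG (e 1 * c)])"
    using M_ctx'[OF Mrel_GG, where xs="[LG (e 2), L21]" and ys="[]"] by simp
  show ?thesis using beq_trans[OF 1 2] .
qed
lemma absL21: "bar_eq sm e (M e [LG c, L21]) (M e [LG (c * e 2), L21, LG (e 1)])"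
proof -
  have 1: "bar_eq sm e (M e [LG c, L21]) (M e [LG c, LG (e 2), L21, LG (e 1)])"
    using M_ctx'[OF Mrel_E21, where xs="[LG c]" and ys="[]"] by simp
  have 2: "bar_eq sm e (M e [LG c, LG (e 2), L21, LG (e 1)]) (M e [LG (c * e 2), L21, LG (e 1)])"
    using M_ctx'[OF Mrel_GG, where xs="[]" and ys="[L21, LG (e 1)]"] by simp
  show ?thesis using beq_trans[OF 1 2] .
qed

lemma zero3: "bar_eq sm e (M e [LG a, X, LG 0]) (Mo e None)" "bar_eq sm e (M e [LG 0, X, LG a]) (Mo e None)"
  using M_ctx[OF Mrel_G0, where xs="[LG a, X]" and ys="[]"] M_ctx[OF Mrel_G0, where xs="[]" and ys="[X, LG a]"]
  by simp_all

lemma LI_eq: "M e (LI i # r) = M e (LG (e i) # r)" "M e (l # LI i # r) = M e (l # LG (e i) # r)"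
  by (simp_all add: M.simps)

lemma Mrel_LI: assumes "eok e"
  shows "bar_eq sm e (M e [L12, LI 2]) (Mo e (Some [L12]))"
    "bar_eq sm e (M e [L12, LI 1]) (Mo e None)"
    "bar_eq sm e (M e [L21, LI 1]) (Mo e (Some [L21]))"
    "bar_eq sm e (M e [L21, LI 2]) (Mo e None)"
    "bar_eq sm e (M e [LI 1, L12]) (Mo e (Some [L12]))"
    "bar_eq sm e (M e [LI 2, L12]) (Mo e None)"
    "bar_eq sm e (M e [LI 2, L21]) (Mo e (Some [L21]))"
    "bar_eq sm e (M e [LI 1, L21]) (Mo e None)"
proof -
  have f: "e 1 * e 1 = e 1" "e 2 * e 2 = e 2" "e 2 * e 1 = 0" "e 1 * e 2 = 0" using assms by (simp_all add: eok_def)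
  have s12: "bar_eq sm e (M e [LG (e 1), L12, LG (e 2)]) (M e [L12])" by (rule beq_sym[OF Mrel_E12])
  have s21: "bar_eq sm e (M e [LG (e 2), L21, LG (e 1)]) (M e [L21])" by (rule beq_sym[OF Mrel_E21])
  show "bar_eq sm e (M e [L12, LI 2]) (Mo e (Some [L12]))"
    using beq_trans[OF absR12[of sm e "e 2", unfolded f] s12] by (simp add: LI_eq)
  show "bar_eq sm e (M e [L12, LI 1]) (Mo e None)"
    using beq_trans[OF absR12[of sm e "e 1", unfolded f] zero3(1)] by (simp add: LI_eq)
  show "bar_eq sm e (M e [L21, LI 1]) (Mo e (Some [L21]))"
    using beq_trans[OF absR21[of sm e "e 1", unfolded f] s21] by (simp add: LI_eq)
  show "bar_eq sm e (M e [L21, LI 2]) (Mo e None)"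
    using beq_trans[OF absR21[of sm e "e 2", unfolded f] zero3(1)] by (simp add: LI_eq)
  show "bar_eq sm e (M e [LI 1, L12]) (Mo e (Some [L12]))"
    using beq_trans[OF absL12[of sm e "e 1", unfolded f] s12] by (simp add: LI_eq)
  show "bar_eq sm e (M e [LI 2, L12]) (Mo e None)"
    using beq_trans[OF absL12[of sm e "e 2", unfolded f] zero3(2)] by (simp add: LI_eq)
  show "bar_eq sm e (M e [LI 2, L21]) (Mo e (Some [L21]))"
    using beq_trans[OF absL21[of sm e "e 2", unfolded f] s21] by (simp add: LI_eq)
  show "bar_eq sm e (M e [LI 1, L21]) (Mo e None)"
    using beq_trans[OF absL21[of sm e "e 1", unfolded f] zero3(2)] by (simp add: LI_eq)
qed

fun sc1 :: "(nat \<Rightarrow> 'a::ring_1) \<Rightarrow> 'a ltr \<Rightarrow> 'a ltr list \<Rightarrow> 'a ltr list option" where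
  "sc1 e (LG a) (LG b # r) = Some (LG (a * b) # r)"
| "sc1 e (LG a) (LI i # r) = Some (LG (a * e i) # r)"
| "sc1 e (LI i) (LG b # r) = Some (LG (e i * b) # r)"
| "sc1 e (LI i) (LI j # r) = Some (LG (e i * e j) # r)"
| "sc1 e L12 (L12 # r) = None"
| "sc1 e L21 (L21 # r) = None"
| "sc1 e L12 (L21 # r) = sc1 e (LI 1) r"
| "sc1 e L21 (L12 # r) = sc1 e (LI 2) r"
| "sc1 e L12 (LI i # r) = (if i = 2 then sc1 e L12 r else if i = 1 then None else Some (L12 # LI i # r))"
| "sc1 e L21 (LI i # r) = (if i = 1 then sc1 e L21 r else if i = 2 then None else Some (L21 # LI i # r))"
| "sc1 e (LI i) (L12 # r) = (if i = 1 then Some (L12 # r) else if i = 2 then None else Some (LI i # L12 # r))"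
| "sc1 e (LI i) (L21 # r) = (if i = 2 then Some (L21 # r) else if i = 1 then None else Some (LI i # L21 # r))"
| "sc1 e l r = Some (l # r)"

fun nf1 :: "(nat \<Rightarrow> 'a::ring_1) \<Rightarrow> 'a ltr list \<Rightarrow> 'a ltr list option" where
  "nf1 e [] = Some []"
| "nf1 e (l # ls) = (case nf1 e ls of None \<Rightarrow> None | Some r \<Rightarrow> sc1 e l r)"

fun ex2 :: "(nat \<Rightarrow> 'a::ring_1) \<Rightarrow> 'a ltr \<Rightarrow> 'a ltr list" where
  "ex2 e (LG a) = [LG a]"
| "ex2 e L12 = [LG (e 1), L12, LG (e 2)]"
| "ex2 e L21 = [LG (e 2), L21, LG (e 1)]"
| "ex2 e (LI i) = [LG (e i)]"

fun mg :: "'a::ring_1 ltr \<Rightarrow> 'a ltr list \<Rightarrow> 'a ltr list" where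
  "mg (LG a) (LG b # r) = LG (a * b) # r"
| "mg l r = l # r"

fun mrg :: "'a::ring_1 ltr list \<Rightarrow> 'a ltr list" where
  "mrg [] = []"
| "mrg (l # ls) = mg l (mrg ls)"

definition nf2 :: "(nat \<Rightarrow> 'a::ring_1) \<Rightarrow> 'a ltr list \<Rightarrow> 'a ltr list" where
  "nf2 e xs = mrg (LG 1 # concat (map (ex2 e) xs) @ [LG 1])"

definition nf :: "(nat \<Rightarrow> 'a::ring_1) \<Rightarrow> 'a ltr list \<Rightarrow> 'a ltr list option" where
  "nf e xs = map_option (nf2 e) (nf1 e xs)"

lemma ctx0: "bar_eq sm e (M e u) (Mo e v) \<Longrightarrow> bar_eq sm e (M e (u @ r)) (Mo e (map_option (\<lambda>v. v @ r) v))"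
  using M_ctx[where xs="[]" and ys=r] by simp

lemma sc1_sound: "eok e \<Longrightarrow> bar_eq sm e (M e (l # r)) (Mo e (sc1 e l r))"
proof (induction e l r rule: sc1.induct)
  case (1 e a b r) show ?case using M_ctx'[OF Mrel_GG, where xs="[]" and ys=r] by simp
next
  case (2 e a i r) show ?case using ctx0[OF Mrel_GI[of sm e a i], where r=r] by simp
next
  case (3 e i b r) show ?case using ctx0[OF Mrel_IG[of sm e i b], where r=r] by simp
next
  case (4 e i j r) show ?case using ctx0[OF Mrel_II[of sm e i j], where r=r] by simp
next
  case (5 e r) show ?case using ctx0[OF Mrel_E12E12[where sm=sm and e=e], where r=r] "5" by (simp add: eok_def)
next
  case (6 e r) show ?case using ctx0[OF Mrel_E21E21[where sm=sm and e=e], where r=r] "6" by (simp add: eok_def)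
next
  case (7 e r)
  have "bar_eq sm e (M e (L12 # L21 # r)) (M e (LI 1 # r))"
    using M_ctx'[OF Mrel_E12E21, where xs="[]" and ys=r] by (simp add: M.simps)
  then show ?case using 7 by (simp add: beq_trans)
next
  case (8 e r)
  have "bar_eq sm e (M e (L21 # L12 # r)) (M e (LI 2 # r))"
    using M_ctx'[OF Mrel_E21E12, where xs="[]" and ys=r] by (simp add: M.simps)
  then show ?case using 8 by (simp add: beq_trans)
next
  case (9 e i r)
  show ?case
  proof (cases "i = 2")
    case True
    have "bar_eq sm e (M e (L12 # LI 2 # r)) (M e (L12 # r))"
      using ctx0[OF Mrel_LI(1)[OF "9.prems"], where r=r] by simp
    then show ?thesis using True "9.IH"[OF True "9.prems"] by (simp add: beq_trans)
  next
    case False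
    then show ?thesis using ctx0[OF Mrel_LI(2)[OF "9.prems"], where r=r] by auto
  qed
next
  case (10 e i r)
  show ?case
  proof (cases "i = 1")
    case True
    have "bar_eq sm e (M e (L21 # LI 1 # r)) (M e (L21 # r))"
      using ctx0[OF Mrel_LI(3)[OF "10.prems"], where r=r] by simp
    then show ?thesis using True "10.IH"[OF True "10.prems"] by (simp add: beq_trans)
  next
    case False
    then show ?thesis using ctx0[OF Mrel_LI(4)[OF "10.prems"], where r=r] by auto
  qed
next
  case (11 e i r)
  then show ?case using ctx0[OF Mrel_LI(5)[OF "11"], where r=r] ctx0[OF Mrel_LI(6)[OF "11"], where r=r] by auto
next
  case (12 e i r)
  then show ?case using ctx0[OF Mrel_LI(7)[OF "12"], where r=r] ctx0[OF Mrel_LI(8)[OF "12"], where r=r] by auto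
qed simp_all

lemma nf1_sound: assumes "eok e"
  shows "bar_eq sm e (M e xs) (Mo e (nf1 e xs))"
proof (induction xs)
  case Nil then show ?case by simp
next
  case (Cons l ls)
  have "bar_eq sm e (fa_mul (ltv e l) (M e ls)) (fa_mul (ltv e l) (Mo e (nf1 e ls)))"
    by (rule beq_mul[OF beq_refl Cons]) simp_all
  moreover have "bar_eq sm e (fa_mul (ltv e l) (Mo e (nf1 e ls))) (Mo e (nf1 e (l # ls)))"
  proof (cases "nf1 e ls")
    case None then show ?thesis by (simp add: fa_mul_zero_right)
  next
    case (Some r) then show ?thesis using sc1_sound[OF assms, of sm l r] by simp
  qed
  ultimately show ?case by (simp add: beq_trans)
qed

lemma mg_sound: "bar_eq sm e (M e (l # r)) (M e (mg l r))"
proof (induction l r rule: mg.induct)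
  case (1 a b r) show ?case using M_ctx'[OF Mrel_GG, where xs="[]" and ys=r] by simp
qed simp_all

lemma mrg_sound: "bar_eq sm e (M e xs) (M e (mrg xs))"
proof (induction xs)
  case (Cons l ls)
  have "bar_eq sm e (fa_mul (ltv e l) (M e ls)) (fa_mul (ltv e l) (M e (mrg ls)))"
    by (rule beq_mul[OF beq_refl Cons]) simp_all
  then show ?case using mg_sound[of sm e l "mrg ls"] by (simp add: beq_trans)
qed simp

declare M.simps[simp del]

lemma ex2_sound: "bar_eq sm e (M e (ex2 e l)) (M e [l])"
proof (cases l)
  case L12 then show ?thesis using beq_sym[OF Mrel_E12[of sm e]] by simp
next
  case L21 then show ?thesis using beq_sym[OF Mrel_E21[of sm e]] by simp
next
  case (LI i) then show ?thesis by (simp add: M.simps)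
qed simp

lemma concat_ex2_sound: "bar_eq sm e (M e (concat (map (ex2 e) xs))) (M e xs)"
proof (induction xs)
  case (Cons l ls)
  have "bar_eq sm e (fa_mul (M e (ex2 e l)) (M e (concat (map (ex2 e) ls)))) (fa_mul (M e [l]) (M e ls))"
    by (rule beq_mul[OF ex2_sound Cons]) simp_all
  then show ?case by (simp add: M_append[symmetric])
qed simp

lemma nf2_sound: "bar_eq sm e (M e xs) (M e (nf2 e xs))"
proof -
  have i: "bar_eq sm e (fa_mul (M e (concat (map (ex2 e) xs))) (M e [LG 1])) (fa_mul (M e xs) (M e []))"
    by (rule beq_mul[OF concat_ex2_sound Mrel_G1]) (rule M_car)+
  have a0: "bar_eq sm e (fa_mul (M e [LG 1]) (fa_mul (M e (concat (map (ex2 e) xs))) (M e [LG 1])))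
      (fa_mul (M e []) (fa_mul (M e xs) (M e [])))"
    by (rule beq_mul[OF Mrel_G1 i]) (rule M_car car_mul)+
  have a: "bar_eq sm e (M e (LG 1 # concat (map (ex2 e) xs) @ [LG 1])) (M e xs)"
    using a0 by (simp only: M_append[symmetric] append_Nil append_Nil2 append_Cons)
  have b: "bar_eq sm e (M e (LG 1 # concat (map (ex2 e) xs) @ [LG 1])) (M e (nf2 e xs))"
    unfolding nf2_def by (rule mrg_sound)
  show ?thesis using a b by (meson beq_sym beq_trans)
qed

lemma nf_sound: assumes "eok e"
  shows "bar_eq sm e (M e xs) (Mo e (nf e xs))"
proof (cases "nf1 e xs")
  case None then show ?thesis using nf1_sound[OF assms, of sm xs] by (simp add: nf_def)
next
  case (Some r) then show ?thesis using nf1_sound[OF assms, of sm xs] nf2_sound[of sm e r]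
    by (simp add: nf_def beq_trans)
qed

definition Q :: "(nat \<Rightarrow> 'a) \<Rightarrow> (('k::field, 'a) fel \<Rightarrow> ('k, 'a) fel \<Rightarrow> 'k) \<Rightarrow> 'a ltr list \<Rightarrow> 'a ltr list \<Rightarrow> 'k" where
  "Q e \<phi> xs ys = \<phi> (M e xs) (M e ys)"

lemma phiM: assumes "bar_form sm e \<phi>" "eok e"
  shows "\<phi> (M e xs) (M e ys) = (case nf e xs of None \<Rightarrow> 0 | Some a \<Rightarrow> (case nf e ys of None \<Rightarrow> 0 | Some b \<Rightarrow> Q e \<phi> a b))"
proof -
  have 1: "\<phi> (M e xs) (M e ys) = \<phi> (Mo e (nf e xs)) (M e ys)"
    by (rule bf_beq1[OF assms(1) nf_sound[OF assms(2)]]) simp_all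
  have 2: "\<phi> (Mo e (nf e xs)) (M e ys) = \<phi> (Mo e (nf e xs)) (Mo e (nf e ys))"
    by (rule bf_beq2[OF assms(1) nf_sound[OF assms(2)]]) simp_all
  have 3: "\<phi> fa_zero y = 0" "\<phi> y fa_zero = 0" if "y \<in> fa_car" for y
    using bf_I1[OF assms(1)] bf_I2[OF assms(1)] that by simp_all
  show ?thesis unfolding 1 2
    by (cases "nf e xs"; cases "nf e ys") (simp_all add: Q_def 3)
qed

lemma Q_zero1: assumes "bar_form sm e \<phi>" "LG 0 \<in> set a" shows "Q e \<phi> a b = 0"
proof -
  obtain xs ys where a: "a = xs @ LG 0 # ys" using assms(2) by (meson split_list)
  have "bar_eq sm e (M e a) fa_zero" using M_ctx[OF Mrel_G0, where xs=xs and ys=ys] a by simp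
  then show ?thesis unfolding Q_def using bf_I1[OF assms(1)] by (simp add: bar_eq_def fa_sub_def fa_zero_def)
qed
lemma Q_zero2: assumes "bar_form sm e \<phi>" "LG 0 \<in> set b" shows "Q e \<phi> a b = 0"
proof -
  obtain xs ys where a: "b = xs @ LG 0 # ys" using assms(2) by (meson split_list)
  have "bar_eq sm e (M e b) fa_zero" using M_ctx[OF Mrel_G0, where xs=xs and ys=ys] a by simp
  then show ?thesis unfolding Q_def using bf_I2[OF assms(1)] by (simp add: bar_eq_def fa_sub_def fa_zero_def)
qed

lemma toM: "G a = M e [LG a]" "E12 = M e [L12]" "E21 = M e [L21]" "fa_one = M e []"
  by (simp_all add: fa_mul_one_right M.simps)
lemma toMI: "G (e i) = M e [LI i]"
  by (simp_all add: fa_mul_one_right M.simps)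
lemma M_mul: "fa_mul (M e xs) (M e ys) = M e (xs @ ys)" by (simp add: M_append)


lemmas nsimps = toM M_mul fa_mul_sc_right fa_mul_sc_left fa_neg_sc fa_sc_sc nf_def nf2_def mult.assoc

lemma M_beq_nf: assumes "eok e" "nf e xs = nf e ys" "nf e xs \<noteq> None"
  shows "bar_eq sm e (M e xs) (M e ys)"
proof -
  obtain z where z: "nf e xs = Some z" using assms(3) by auto
  have "bar_eq sm e (M e xs) (M e z)" using nf_sound[OF assms(1), of sm xs] z by simp
  moreover have "bar_eq sm e (M e ys) (M e z)" using nf_sound[OF assms(1), of sm ys] z assms(2) by simp
  ultimately show ?thesis by (meson beq_sym beq_trans)
qed

lemma M_zero_nf: assumes "eok e" "nf e xs = None \<or> (\<exists>z. nf e xs = Some z \<and> LG 0 \<in> set z)"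
  shows "bar_eq sm e (M e xs) fa_zero"
proof (cases "nf e xs")
  case None then show ?thesis using nf_sound[OF assms(1), of sm xs] by simp
next
  case (Some z)
  then have "LG 0 \<in> set z" using assms(2) by auto
  then obtain u v where a: "z = u @ LG 0 # v" by (meson split_list)
  have "bar_eq sm e (M e z) fa_zero" using M_ctx[OF Mrel_G0, where xs=u and ys=v] a by simp
  then show ?thesis using nf_sound[OF assms(1), of sm xs] Some by (simp add: beq_trans)
qed

lemma rel_Gneg: "bar_eq sm e (G (- b)) (fa_sc (-1) (G b))"
proof -
  have 1: "fa_sub (G (b + - b)) (fa_add (G b) (G (- b))) \<in> Ibar sm e"
    using rel_Gadd[of sm e b "-b"] by (simp add: bar_eq_def)
  have 2: "G (b + - b) \<in> Ibar sm e" using rel_G0[of sm e] by (simp add: bar_eq_def fa_sub_def fa_zero_def)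
  have "fa_sub (G (b + - b)) (fa_sub (G (b + - b)) (fa_add (G b) (G (- b)))) \<in> Ibar sm e"
    using Ibar_sub[OF 2 1] .
  moreover have "fa_sub (G (b + - b)) (fa_sub (G (b + - b)) (fa_add (G b) (G (- b)))) = fa_sub (G (- b)) (fa_sc (-1) (G b))"
    by (simp add: fa_sub_def fa_add_def fa_sc_def add.commute)
  ultimately show ?thesis unfolding bar_eq_def by metis
qed

lemma eps_M: "bar_eq sm e (epsb e) (M e [LG (epsA e)])"
proof -
  have "bar_eq sm e (G (1 + - e 2)) (fa_add (G 1) (G (- e 2)))" by (rule rel_Gadd)
  moreover have "bar_eq sm e (fa_add (G 1) (G (- e 2))) (fa_add fa_one (fa_sc (-1) (G (e 2))))"
    by (rule beq_add[OF rel_G1 rel_Gneg])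
  ultimately have "bar_eq sm e (G (1 + - e 2)) (epsb e)"
    unfolding epsb_def fa_sub_sc by (rule beq_trans)
  then show ?thesis by (simp add: epsA_def toM[where e=e] beq_sym)
qed

lemma one_split: "fa_add (epsb e) (G (e 2)) = fa_one"
  unfolding epsb_def fa_add_def fa_sub_def by simp

definition dw :: "('a + bool) list \<Rightarrow> ('k::field, 'a) fel" where
  "dw w = (\<lambda>u. if u = w then 1 else 0)"

lemma dw_Nil: "dw [] = fa_one" by (simp add: dw_def fa_one_def)
lemma dw_Cons: "dw (x # w) = fa_mul (fa_gen x) (dw w)"
proof
  fix u show "dw (x # w) u = fa_mul (fa_gen x) (dw w) u"
  proof (cases u)
    case Nil then show ?thesis by (simp add: dw_def fa_mul_Nil fa_gen_def)
  next
    case (Cons a v)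
    have f: "fa_mul (\<lambda>u. fa_gen x (a # u)) (dw w) v = (if a = x \<and> v = w then 1 else 0)"
    proof -
      have h: "(\<lambda>u. fa_gen x (a # u)) = (if a = x then fa_one else fa_zero)"
        by (auto simp: fa_gen_def fa_one_def fa_zero_def)
      show ?thesis unfolding h
        by (cases "a = x") (simp_all add: fa_mul_one_left fa_mul_zero_left, simp_all add: fa_zero_def dw_def)
    qed
    moreover have g0: "(fa_gen x :: ('k::field, 'a) fel) [] = 0" by (simp add: fa_gen_def)
    show ?thesis unfolding Cons fa_mul_Cons g0 mult_zero_left add_0_left f by (simp add: dw_def)
  qed
qed
lemma dw_car[simp]: "dw w \<in> fa_car" unfolding car_iff dw_def by simp


lemma assoc_rule: "(a::'a::ring_1) * b = c \<Longrightarrow> a * (b * x) = c * x"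
  by (simp add: mult.assoc[symmetric])

inductive_set Spn :: "(nat \<Rightarrow> 'a::ring_1) \<Rightarrow> ('k::field, 'a) fel set" for e where
  sgen: "gen_ok e k \<alpha> \<Longrightarrow> gen_el k \<alpha> \<in> Spn e"
| sadd: "x \<in> Spn e \<Longrightarrow> y \<in> Spn e \<Longrightarrow> fa_add x y \<in> Spn e"
| ssc: "x \<in> Spn e \<Longrightarrow> fa_sc c x \<in> Spn e"
| smul: "x \<in> Spn e \<Longrightarrow> y \<in> Spn e \<Longrightarrow> fa_mul x y \<in> Spn e"

fun lt :: "'a + bool \<Rightarrow> 'a ltr list" where
  "lt (Inl a) = [LG a]" | "lt (Inr True) = [L12]" | "lt (Inr False) = [L21]"

lemma fa_gen_M: "fa_gen x = M e (lt x)"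
  by (cases x rule: lt.cases) (simp_all add: toM[symmetric] G_def E12_def E21_def)

locale FX =
  fixes sm :: "'k::field_char_0 \<Rightarrow> 'a::ring_1 \<Rightarrow> 'a" and e :: "nat \<Rightarrow> 'a" and N :: nat
    and br :: "'a \<Rightarrow> 'a \<Rightarrow> ('a \<times> 'a) list" and \<Phi> :: "nat \<Rightarrow> 'a"
    and F :: "('k, 'a) fel \<Rightarrow> ('k, 'a) fel \<Rightarrow> (('k, 'a) fel \<times> ('k, 'a) fel) list"
  assumes N2: "N \<ge> 2"
    and base: "base_ok sm e N"
    and qh: "quasi_hamiltonian sm e N br \<Phi>"
    and fd: "fus_dbracket sm e F"
    and gens: "\<forall>k1 \<alpha> k2 \<beta>. gen_ok e k1 \<alpha> \<and> gen_ok e k2 \<beta> \<longrightarrow>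
           bar_teq sm e (F (gen_el k1 \<alpha>) (gen_el k2 \<beta>)) (ind_br br k1 \<alpha> k2 \<beta> @ fus_br e k1 \<alpha> k2 \<beta>)"
begin

lemma e_idem: "s \<in> {1..N} \<Longrightarrow> e s * e s = e s"
  using base unfolding base_ok_def by blast
lemma e_orth: "s \<in> {1..N} \<Longrightarrow> t \<in> {1..N} \<Longrightarrow> s \<noteq> t \<Longrightarrow> e s * e t = 0"
  using base unfolding base_ok_def by blast

lemma e11: "e 1 * e 1 = e 1" using e_idem N2 by simp
lemma e22: "e 2 * e 2 = e 2" using e_idem N2 by simp
lemma e21: "e 2 * e 1 = 0" using e_orth N2 by simp
lemma e12: "e 1 * e 2 = 0" using e_orth N2 by simp

lemmas efacts0 = e11 e22 e21 e12 assoc_rule[OF e11] assoc_rule[OF e22] assoc_rule[OF e21] assoc_rule[OF e12]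
lemmas efacts = efacts0 efacts0[simplified]

lemma eokE: "eok e" using e11 e22 e21 e12 by (simp add: eok_def)

lemma sw1: "(\<alpha>::'a) = p * \<alpha> * q \<Longrightarrow> x * p = 0 \<Longrightarrow> x * \<alpha> = 0"
proof -
  assume h: "\<alpha> = p * \<alpha> * q" "x * p = 0"
  have "x * \<alpha> = (x * p) * \<alpha> * q" by (subst h(1)) (simp add: mult.assoc)
  then show ?thesis using h(2) by simp
qed
lemma sw2: "(\<alpha>::'a) = p * \<alpha> * q \<Longrightarrow> q * y = 0 \<Longrightarrow> \<alpha> * y = 0"
proof -
  assume h: "\<alpha> = p * \<alpha> * q" "q * y = 0"
  have "\<alpha> * y = p * \<alpha> * (q * y)" by (subst h(1)) (simp add: mult.assoc)
  then show ?thesis using h(2) by simp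
qed
lemma sw3: "(\<alpha>::'a) = p * \<alpha> * q \<Longrightarrow> x * p = p \<Longrightarrow> x * \<alpha> = \<alpha>"
proof -
  assume h: "\<alpha> = p * \<alpha> * q" "x * p = p"
  have "x * \<alpha> = (x * p) * \<alpha> * q" by (subst h(1)) (simp add: mult.assoc)
  then show ?thesis using h by simp
qed
lemma sw4: "(\<alpha>::'a) = p * \<alpha> * q \<Longrightarrow> q * y = q \<Longrightarrow> \<alpha> * y = \<alpha>"
proof -
  assume h: "\<alpha> = p * \<alpha> * q" "q * y = q"
  have "\<alpha> * y = p * \<alpha> * (q * y)" by (subst h(1)) (simp add: mult.assoc)
  then show ?thesis using h by simp
qed

lemma epsA_facts: "e 2 * epsA e = 0" "epsA e * e 2 = 0" by (simp_all add: epsA_def algebra_simps e22)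

lemma gen_facts:
  "gen_ok e KT \<alpha> \<Longrightarrow> e 2 * \<alpha> = 0 \<and> \<alpha> * e 2 = 0"
  "gen_ok e KU \<alpha> \<Longrightarrow> e 2 * \<alpha> = \<alpha> \<and> \<alpha> * e 2 = 0"
  "gen_ok e KV \<alpha> \<Longrightarrow> e 2 * \<alpha> = 0 \<and> \<alpha> * e 2 = \<alpha>"
  "gen_ok e KW \<alpha> \<Longrightarrow> e 2 * \<alpha> = \<alpha> \<and> \<alpha> * e 2 = \<alpha>"
  unfolding gen_ok_def gkind.case
  subgoal by (intro conjI sw1[OF _ epsA_facts(1)] sw2[OF _ epsA_facts(2)])
  subgoal by (intro conjI sw3[OF _ e22] sw2[OF _ epsA_facts(2)])
  subgoal by (intro conjI sw1[OF _ epsA_facts(1)] sw4[OF _ e22])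
  subgoal by (intro conjI sw3[OF _ e22] sw4[OF _ e22])
  done

lemma gen_car[simp]: "gen_el k \<alpha> \<in> fa_car"
  by (cases k) (simp_all add: gen_el_def eplus_def eminus_def E12_def E21_def)

lemma gen_M: "gen_el KT \<alpha> = M e [LG \<alpha>]" "gen_el KU \<alpha> = M e [L12, LG \<alpha>]"
  "gen_el KV \<alpha> = M e [LG \<alpha>, L21]" "gen_el KW \<alpha> = M e [L12, LG \<alpha>, L21]"
  by (simp_all add: gen_el_def eplus_def eminus_def toM[where e=e] M_mul)

lemma beq_MMM: assumes "bar_eq sm e X (M e a)" "bar_eq sm e Y (M e c)" "X \<in> fa_car" "Y \<in> fa_car"
  shows "bar_eq sm e (fa_mul (fa_mul X (M e b)) Y) (M e (a @ b @ c))"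
proof -
  have "bar_eq sm e (fa_mul (fa_mul X (M e b)) Y) (fa_mul (fa_mul (M e a) (M e b)) (M e c))"
    by (rule beq_mul[OF beq_mul[OF assms(1) beq_refl] assms(2)]) (simp_all add: assms)
  then show ?thesis by (simp add: M_mul)
qed

lemmas Msimps = toM[where e=e] M_mul fa_mul_sc_right fa_mul_sc_left fa_neg_sc fa_sc_sc nf_def nf2_def mult.assoc efacts epsA_def ring_distribs

lemma eps_car[simp]: "epsb e \<in> fa_car" by (simp add: epsb_def)

lemma gen_in_A: assumes "gen_ok e k \<alpha>" shows "gen_el k \<alpha> \<in> Af sm e"
proof -
  have "bar_eq sm e (gen_el k \<alpha>) (fa_mul (fa_mul (epsb e) (gen_el k \<alpha>)) (epsb e))"
  proof (cases k)
    case KT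
    have f: "e 2 * \<alpha> = 0" "\<alpha> * e 2 = 0" using gen_facts(1) assms KT by auto
    have "bar_eq sm e (M e [LG \<alpha>]) (M e ([LG (epsA e)] @ [LG \<alpha>] @ [LG (epsA e)]))"
      by (rule M_beq_nf[OF eokE]) (simp_all add: Msimps f assoc_rule[OF f(1)] assoc_rule[OF f(2)])
    from beq_trans[OF this beq_sym[OF beq_MMM[OF eps_M eps_M eps_car eps_car, where b="[LG \<alpha>]"]]] show ?thesis using KT by (simp only: gen_M)
  next
    case KU
    have f: "e 2 * \<alpha> = \<alpha>" "\<alpha> * e 2 = 0" using gen_facts(2) assms KU by auto
    have "bar_eq sm e (M e [L12, LG \<alpha>]) (M e ([LG (epsA e)] @ [L12, LG \<alpha>] @ [LG (epsA e)]))"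
      by (rule M_beq_nf[OF eokE]) (simp_all add: Msimps f assoc_rule[OF f(1)] assoc_rule[OF f(2)])
    from beq_trans[OF this beq_sym[OF beq_MMM[OF eps_M eps_M eps_car eps_car, where b="[L12, LG \<alpha>]"]]] show ?thesis using KU by (simp only: gen_M)
  next
    case KV
    have f: "e 2 * \<alpha> = 0" "\<alpha> * e 2 = \<alpha>" using gen_facts(3) assms KV by auto
    have "bar_eq sm e (M e [LG \<alpha>, L21]) (M e ([LG (epsA e)] @ [LG \<alpha>, L21] @ [LG (epsA e)]))"
      by (rule M_beq_nf[OF eokE]) (simp_all add: Msimps f assoc_rule[OF f(1)] assoc_rule[OF f(2)])
    from beq_trans[OF this beq_sym[OF beq_MMM[OF eps_M eps_M eps_car eps_car, where b="[LG \<alpha>, L21]"]]] show ?thesis using KV by (simp only: gen_M)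
  next
    case KW
    have f: "e 2 * \<alpha> = \<alpha>" "\<alpha> * e 2 = \<alpha>" using gen_facts(4) assms KW by auto
    have "bar_eq sm e (M e [L12, LG \<alpha>, L21]) (M e ([LG (epsA e)] @ [L12, LG \<alpha>, L21] @ [LG (epsA e)]))"
      by (rule M_beq_nf[OF eokE]) (simp_all add: Msimps f assoc_rule[OF f(1)] assoc_rule[OF f(2)])
    from beq_trans[OF this beq_sym[OF beq_MMM[OF eps_M eps_M eps_car eps_car, where b="[L12, LG \<alpha>, L21]"]]] show ?thesis using KW by (simp only: gen_M)
  qed
  then show ?thesis by (simp add: Af_def)
qed


lemma A_car: "a \<in> Af sm e \<Longrightarrow> a \<in> fa_car" by (simp add: Af_def)
lemma A_beq: "a \<in> Af sm e \<Longrightarrow> bar_eq sm e a (fa_mul (fa_mul (epsb e) a) (epsb e))" by (simp add: Af_def)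

lemma beq_ctx: assumes "bar_eq sm e x x'" "x \<in> fa_car" "x' \<in> fa_car" "p \<in> fa_car" "q \<in> fa_car"
  shows "bar_eq sm e (fa_mul (fa_mul p x) q) (fa_mul (fa_mul p x') q)"
  by (rule beq_mul[OF beq_mul[OF beq_refl assms(1)] beq_refl]) (simp_all add: assms)

lemma eps_eps: "bar_eq sm e (fa_mul (epsb e) (epsb e)) (epsb e)"
proof -
  have 1: "bar_eq sm e (fa_mul (epsb e) (epsb e)) (fa_mul (M e [LG (epsA e)]) (M e [LG (epsA e)]))"
    by (rule beq_mul[OF eps_M eps_M]) simp_all
  have 2: "bar_eq sm e (M e [LG (epsA e), LG (epsA e)]) (M e [LG (epsA e)])"
    by (rule M_beq_nf[OF eokE]) (simp_all add: Msimps)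
  have 3: "bar_eq sm e (M e [LG (epsA e)]) (epsb e)" using beq_sym[OF eps_M] .
  show ?thesis using beq_trans[OF beq_trans[OF 1[unfolded M_mul, simplified] 2] 3] by simp
qed

lemma A_add: "a \<in> Af sm e \<Longrightarrow> b \<in> Af sm e \<Longrightarrow> fa_add a b \<in> Af sm e"
  unfolding Af_def using beq_add by (fastforce simp: fa_mul_add_left fa_mul_add_right)
lemma A_sc: "a \<in> Af sm e \<Longrightarrow> fa_sc c a \<in> Af sm e"
  unfolding Af_def using beq_sc by (fastforce simp: fa_mul_sc_left fa_mul_sc_right)

lemma A_epsr: assumes "a \<in> Af sm e" shows "bar_eq sm e (fa_mul a (epsb e)) a"
proof -
  have a: "a \<in> fa_car" using assms A_car by auto
  have "bar_eq sm e (fa_mul a (epsb e)) (fa_mul (fa_mul (fa_mul (epsb e) a) (epsb e)) (epsb e))"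
    by (rule beq_mul[OF A_beq[OF assms] beq_refl]) (simp_all add: a)
  also have "fa_mul (fa_mul (fa_mul (epsb e) a) (epsb e)) (epsb e) = fa_mul (fa_mul (epsb e) a) (fa_mul (epsb e) (epsb e))"
    by (simp add: fa_mul_assoc)
  finally have 1: "bar_eq sm e (fa_mul a (epsb e)) (fa_mul (fa_mul (epsb e) a) (fa_mul (epsb e) (epsb e)))" .
  have 2: "bar_eq sm e (fa_mul (fa_mul (epsb e) a) (fa_mul (epsb e) (epsb e))) (fa_mul (fa_mul (epsb e) a) (epsb e))"
    by (rule beq_mul[OF beq_refl eps_eps]) (simp_all add: a)
  show ?thesis using beq_trans[OF beq_trans[OF 1 2] beq_sym[OF A_beq[OF assms]]] .
qed

lemma A_epsl: assumes "a \<in> Af sm e" shows "bar_eq sm e (fa_mul (epsb e) a) a"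
proof -
  have a: "a \<in> fa_car" using assms A_car by auto
  have "bar_eq sm e (fa_mul (epsb e) a) (fa_mul (epsb e) (fa_mul (fa_mul (epsb e) a) (epsb e)))"
    by (rule beq_mul[OF beq_refl A_beq[OF assms]]) (simp_all add: a)
  also have "fa_mul (epsb e) (fa_mul (fa_mul (epsb e) a) (epsb e)) = fa_mul (fa_mul (fa_mul (epsb e) (epsb e)) a) (epsb e)"
    by (simp add: fa_mul_assoc)
  finally have 1: "bar_eq sm e (fa_mul (epsb e) a) (fa_mul (fa_mul (fa_mul (epsb e) (epsb e)) a) (epsb e))" .
  have 2: "bar_eq sm e (fa_mul (fa_mul (fa_mul (epsb e) (epsb e)) a) (epsb e)) (fa_mul (fa_mul (epsb e) a) (epsb e))"
    by (rule beq_mul[OF beq_mul[OF eps_eps beq_refl] beq_refl]) (simp_all add: a)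
  show ?thesis using beq_trans[OF beq_trans[OF 1 2] beq_sym[OF A_beq[OF assms]]] .
qed

lemma A_mul: assumes "a \<in> Af sm e" "b \<in> Af sm e" shows "fa_mul a b \<in> Af sm e"
proof -
  have c: "a \<in> fa_car" "b \<in> fa_car" using assms A_car by auto
  have "bar_eq sm e (fa_mul (fa_mul (epsb e) a) (fa_mul b (epsb e))) (fa_mul a b)"
    by (rule beq_mul[OF A_epsl[OF assms(1)] A_epsr[OF assms(2)]]) (simp_all add: c)
  then show ?thesis unfolding Af_def using c by (simp add: fa_mul_assoc beq_sym)
qed

lemma A_beq_closed: assumes "a \<in> Af sm e" "b \<in> fa_car" "bar_eq sm e a b" shows "b \<in> Af sm e"
proof -
  have c: "a \<in> fa_car" using assms A_car by auto
  have "bar_eq sm e (fa_mul (fa_mul (epsb e) a) (epsb e)) (fa_mul (fa_mul (epsb e) b) (epsb e))"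
    by (rule beq_ctx[OF assms(3)]) (simp_all add: c assms)
  then have "bar_eq sm e b (fa_mul (fa_mul (epsb e) b) (epsb e))"
    using assms A_beq[OF assms(1)] by (meson beq_sym beq_trans)
  then show ?thesis unfolding Af_def using assms by simp
qed


abbreviation SP :: "('k, 'a) fel set" where "SP \<equiv> Spn e"

lemma Spn_A: "x \<in> SP \<Longrightarrow> x \<in> Af sm e"
  by (induction rule: Spn.induct) (simp_all add: gen_in_A A_add A_sc A_mul)
lemma Spn_car: "x \<in> SP \<Longrightarrow> x \<in> fa_car"
  using Spn_A A_car by blast
lemma Spn_zero: "fa_zero \<in> SP"
proof -
  have "gen_ok e KT 0" by (simp add: gen_ok_def)
  then have "fa_sc 0 (gen_el KT 0) \<in> SP" by (intro Spn.ssc Spn.sgen)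
  then show ?thesis by (simp add: fa_sc_zero)
qed

lemma epsA_idem: "epsA e * epsA e = epsA e"
  by (simp add: epsA_def algebra_simps e22)

lemma gen_okI:
  "gen_ok e KT (epsA e * \<alpha> * epsA e)" "gen_ok e KU (e 2 * \<alpha> * epsA e)"
  "gen_ok e KV (epsA e * \<alpha> * e 2)" "gen_ok e KW (e 2 * \<alpha> * e 2)"
  by (simp_all add: gen_ok_def mult.assoc epsA_idem assoc_rule[OF epsA_idem] e22 assoc_rule[OF e22])

lemma zero_wit: "bar_eq sm e x fa_zero \<Longrightarrow> \<exists>b\<in>SP. bar_eq sm e x b"
  using Spn_zero by blast
lemma gen_wit: "gen_ok e k \<alpha> \<Longrightarrow> bar_eq sm e x (gen_el k \<alpha>) \<Longrightarrow> \<exists>b\<in>SP. bar_eq sm e x b"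
  using Spn.sgen by blast

lemma letterM: assumes "xl \<in> {[LG (epsA e)], [L12]}" "yl \<in> {[LG (epsA e)], [L21]}"
  shows "\<exists>b\<in>SP. bar_eq sm e (M e (xl @ lt x @ yl)) b"
proof (cases x rule: lt.cases)
  case (1 a)
  show ?thesis using assms 1
    apply (elim insertE emptyE; simp)
    subgoal by (rule gen_wit[OF gen_okI(1)], simp only: gen_M, rule M_beq_nf[OF eokE]) (simp_all add: Msimps)
    subgoal by (rule gen_wit[OF gen_okI(3)], simp only: gen_M, rule M_beq_nf[OF eokE]) (simp_all add: Msimps)
    subgoal by (rule gen_wit[OF gen_okI(2)], simp only: gen_M, rule M_beq_nf[OF eokE]) (simp_all add: Msimps)
    subgoal by (rule gen_wit[OF gen_okI(4)], simp only: gen_M, rule M_beq_nf[OF eokE]) (simp_all add: Msimps)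
    done
next
  case 2
  have g: "gen_ok e KT (e 1)" by (simp add: gen_ok_def epsA_def algebra_simps efacts)
  show ?thesis using assms 2
    apply (elim insertE emptyE; simp)
    subgoal by (rule zero_wit, rule M_zero_nf[OF eokE]) (simp add: Msimps)
    subgoal by (rule gen_wit[OF g], simp only: gen_M, rule M_beq_nf[OF eokE]) (simp_all add: Msimps)
    subgoal by (rule zero_wit, rule M_zero_nf[OF eokE]) (simp add: Msimps)
    subgoal by (rule zero_wit, rule M_zero_nf[OF eokE]) (simp add: Msimps)
    done
next
  case 3
  have g: "gen_ok e KT (e 1)" by (simp add: gen_ok_def epsA_def algebra_simps efacts)
  show ?thesis using assms 3
    apply (elim insertE emptyE; simp)
    subgoal by (rule zero_wit, rule M_zero_nf[OF eokE]) (simp add: Msimps)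
    subgoal by (rule zero_wit, rule M_zero_nf[OF eokE]) (simp add: Msimps)
    subgoal by (rule gen_wit[OF g], simp only: gen_M, rule M_beq_nf[OF eokE]) (simp_all add: Msimps)
    subgoal by (rule zero_wit, rule M_zero_nf[OF eokE]) (simp add: Msimps)
    done
qed


lemma X_M: "X \<in> {epsb e, E12} \<Longrightarrow> \<exists>xl \<in> {[LG (epsA e)], [L12]}. bar_eq sm e X (M e xl)"
  using eps_M by (auto simp: toM[where e=e])
lemma Y_M: "Y \<in> {epsb e, E21} \<Longrightarrow> \<exists>yl \<in> {[LG (epsA e)], [L21]}. bar_eq sm e Y (M e yl)"
  using eps_M by (auto simp: toM[where e=e])
lemma XY_car: "X \<in> {epsb e, E12} \<Longrightarrow> X \<in> fa_car" "Y \<in> {epsb e, E21} \<Longrightarrow> Y \<in> fa_car"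
  by auto

lemma letter: assumes "X \<in> {epsb e, E12}" "Y \<in> {epsb e, E21}"
  shows "\<exists>b\<in>SP. bar_eq sm e (fa_mul (fa_mul X (fa_gen x)) Y) b"
proof -
  obtain xl where xl: "xl \<in> {[LG (epsA e)], [L12]}" "bar_eq sm e X (M e xl)" using X_M[OF assms(1)] by blast
  obtain yl where yl: "yl \<in> {[LG (epsA e)], [L21]}" "bar_eq sm e Y (M e yl)" using Y_M[OF assms(2)] by blast
  have 1: "bar_eq sm e (fa_mul (fa_mul X (fa_gen x)) Y) (M e (xl @ lt x @ yl))"
    unfolding fa_gen_M[where e=e] by (rule beq_MMM[OF xl(2) yl(2) XY_car(1)[OF assms(1)] XY_car(2)[OF assms(2)]])
  obtain b where "b \<in> SP" "bar_eq sm e (M e (xl @ lt x @ yl)) b" using letterM[OF xl(1) yl(1)] by blast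
  then show ?thesis using 1 beq_trans by blast
qed

lemma emptyM: assumes "xl \<in> {[LG (epsA e)], [L12]}" "yl \<in> {[LG (epsA e)], [L21]}"
  shows "\<exists>b\<in>SP. bar_eq sm e (M e (xl @ [] @ yl)) b"
proof -
  have g: "gen_ok e KT (e 1)" by (simp add: gen_ok_def epsA_def algebra_simps efacts)
  have g2: "gen_ok e KT (epsA e)" by (simp add: gen_ok_def epsA_idem)
  show ?thesis using assms
    apply (elim insertE emptyE; simp)
    subgoal by (rule gen_wit[OF g2], simp only: gen_M, rule M_beq_nf[OF eokE]) (simp_all add: Msimps)
    subgoal by (rule zero_wit, rule M_zero_nf[OF eokE]) (simp add: Msimps)
    subgoal by (rule zero_wit, rule M_zero_nf[OF eokE]) (simp add: Msimps)
    subgoal by (rule gen_wit[OF g], simp only: gen_M, rule M_beq_nf[OF eokE]) (simp_all add: Msimps)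
    done
qed

lemma corner: "X \<in> {epsb e, E12} \<Longrightarrow> Y \<in> {epsb e, E21} \<Longrightarrow> \<exists>b\<in>SP. bar_eq sm e (fa_mul (fa_mul X (dw w)) Y) b"
proof (induction w arbitrary: X Y)
  case Nil
  obtain xl where xl: "xl \<in> {[LG (epsA e)], [L12]}" "bar_eq sm e X (M e xl)" using X_M[OF Nil(1)] by blast
  obtain yl where yl: "yl \<in> {[LG (epsA e)], [L21]}" "bar_eq sm e Y (M e yl)" using Y_M[OF Nil(2)] by blast
  have 1: "bar_eq sm e (fa_mul (fa_mul X (M e [])) Y) (M e (xl @ [] @ yl))"
    by (rule beq_MMM[OF xl(2) yl(2) XY_car(1)[OF Nil(1)] XY_car(2)[OF Nil(2)]])
  obtain b where "b \<in> SP" "bar_eq sm e (M e (xl @ [] @ yl)) b" using emptyM[OF xl(1) yl(1)] by blast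
  then show ?case using 1 beq_trans unfolding dw_Nil toM[where e=e] by blast
next
  case (Cons x w)
  have cX: "X \<in> fa_car" and cY: "Y \<in> fa_car" using Cons.prems by auto
  define P where "P = fa_mul X (fa_gen x)"
  define Q where "Q = fa_mul (dw w) Y"
  have cP: "P \<in> fa_car" and cQ: "Q \<in> fa_car" using cX cY by (simp_all add: P_def Q_def)
  have split: "fa_mul (fa_mul X (dw (x # w))) Y = fa_add (fa_mul (fa_mul P (epsb e)) Q) (fa_mul (fa_mul P (G (e 2))) Q)"
  proof -
    have "fa_mul (fa_mul X (dw (x # w))) Y = fa_mul (fa_mul P fa_one) Q"
      by (simp add: P_def Q_def dw_Cons fa_mul_assoc fa_mul_one_right)
    also have "\<dots> = fa_mul (fa_mul P (fa_add (epsb e) (G (e 2)))) Q" by (simp add: one_split)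
    finally show ?thesis by (simp add: fa_mul_add_left fa_mul_add_right)
  qed
  have t1: "bar_eq sm e (fa_mul (fa_mul P (epsb e)) Q) (fa_mul (fa_mul P (epsb e)) (fa_mul (epsb e) Q))"
  proof -
    have "bar_eq sm e (fa_mul (fa_mul P (fa_mul (epsb e) (epsb e))) Q) (fa_mul (fa_mul P (epsb e)) Q)"
      by (rule beq_ctx[OF eps_eps]) (simp_all add: cP cQ)
    then show ?thesis by (simp add: fa_mul_assoc beq_sym)
  qed
  have t2: "bar_eq sm e (fa_mul (fa_mul P (G (e 2))) Q) (fa_mul (fa_mul P E21) (fa_mul E12 Q))"
  proof -
    have "bar_eq sm e (fa_mul (fa_mul P (fa_mul E21 E12)) Q) (fa_mul (fa_mul P (G (e 2))) Q)"
      by (rule beq_ctx[OF rel_E21E12]) (simp_all add: cP cQ)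
    then show ?thesis by (simp add: fa_mul_assoc beq_sym)
  qed
  obtain b1 where b1: "b1 \<in> SP" "bar_eq sm e (fa_mul P (epsb e)) b1"
    using letter[OF Cons.prems(1), of "epsb e" x] by (auto simp: P_def)
  obtain b2 where b2: "b2 \<in> SP" "bar_eq sm e (fa_mul P E21) b2"
    using letter[OF Cons.prems(1), of E21 x] by (auto simp: P_def)
  obtain c1 where c1: "c1 \<in> SP" "bar_eq sm e (fa_mul (epsb e) Q) c1"
    using Cons.IH[of "epsb e" Y] Cons.prems(2) by (auto simp: Q_def fa_mul_assoc)
  obtain c2 where c2: "c2 \<in> SP" "bar_eq sm e (fa_mul E12 Q) c2"
    using Cons.IH[of E12 Y] Cons.prems(2) by (auto simp: Q_def fa_mul_assoc)
  have "bar_eq sm e (fa_mul (fa_mul P (epsb e)) (fa_mul (epsb e) Q)) (fa_mul b1 c1)"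
    by (rule beq_mul[OF b1(2) c1(2)]) (simp_all add: Spn_car b1 cQ)
  moreover have "bar_eq sm e (fa_mul (fa_mul P E21) (fa_mul E12 Q)) (fa_mul b2 c2)"
    by (rule beq_mul[OF b2(2) c2(2)]) (simp_all add: Spn_car b2 cQ)
  ultimately have "bar_eq sm e (fa_mul (fa_mul X (dw (x # w))) Y) (fa_add (fa_mul b1 c1) (fa_mul b2 c2))"
    unfolding split using t1 t2 by (meson beq_add beq_trans)
  moreover have "fa_add (fa_mul b1 c1) (fa_mul b2 c2) \<in> SP"
    using b1 b2 c1 c2 by (intro Spn.sadd Spn.smul)
  ultimately show ?case by blast
qed

lemma decomp_fin: "finite S \<Longrightarrow> {w. f w \<noteq> 0} \<subseteq> S \<Longrightarrow> \<exists>b\<in>SP. bar_eq sm e (fa_mul (fa_mul (epsb e) f) (epsb e)) b"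
proof (induction S arbitrary: f rule: finite_induct)
  case empty
  then have "f = fa_zero" by (auto simp: fa_zero_def)
  then show ?case using Spn_zero beq_refl by (fastforce simp: fa_mul_zero_left fa_mul_zero_right)
next
  case (insert w S)
  define f' where "f' = (\<lambda>u. if u = w then 0 else f u)"
  have f: "f = fa_add f' (fa_sc (f w) (dw w))"
    by (auto simp: f'_def fa_add_def fa_sc_def dw_def)
  have "{u. f' u \<noteq> 0} \<subseteq> S" using insert.prems by (auto simp: f'_def)
  then obtain b1 where b1: "b1 \<in> SP" "bar_eq sm e (fa_mul (fa_mul (epsb e) f') (epsb e)) b1"
    using insert.IH by blast
  obtain b2 where b2: "b2 \<in> SP" "bar_eq sm e (fa_mul (fa_mul (epsb e) (dw w)) (epsb e)) b2"
    using corner[of "epsb e" "epsb e" w] by auto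
  have "fa_mul (fa_mul (epsb e) f) (epsb e) = fa_add (fa_mul (fa_mul (epsb e) f') (epsb e)) (fa_sc (f w) (fa_mul (fa_mul (epsb e) (dw w)) (epsb e)))"
    by (subst f) (simp add: fa_mul_add_left fa_mul_add_right fa_mul_sc_left fa_mul_sc_right)
  then have "bar_eq sm e (fa_mul (fa_mul (epsb e) f) (epsb e)) (fa_add b1 (fa_sc (f w) b2))"
    using b1 b2 by (simp add: beq_add beq_sc)
  moreover have "fa_add b1 (fa_sc (f w) b2) \<in> SP" using b1 b2 by (intro Spn.sadd Spn.ssc)
  ultimately show ?case by blast
qed

lemma decomp: assumes "a \<in> Af sm e" shows "\<exists>b\<in>SP. bar_eq sm e a b"
proof -
  have "finite {w. a w \<noteq> 0}" using A_car[OF assms] by (simp add: car_iff)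
  then obtain b where "b \<in> SP" "bar_eq sm e (fa_mul (fa_mul (epsb e) a) (epsb e)) b"
    using decomp_fin by blast
  then show ?thesis using A_beq[OF assms] beq_trans by blast
qed

end

definition SS :: "(('k::field, 'a) fel \<Rightarrow> ('k, 'a) fel \<Rightarrow> 'k) \<Rightarrow> (('k, 'a) fel \<times> ('k, 'a) fel) list \<Rightarrow> 'k" where
  "SS \<phi> xs = (\<Sum>(x, y)\<leftarrow>xs. \<phi> x y)"

lemma SS_append[simp]: "SS \<phi> (xs @ ys) = SS \<phi> xs + SS \<phi> ys" by (simp add: SS_def)
lemma SS_Nil[simp]: "SS \<phi> [] = 0" by (simp add: SS_def)
lemma SS_Cons[simp]: "SS \<phi> ((x, y) # xs) = \<phi> x y + SS \<phi> xs" by (simp add: SS_def)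
lemma SS_map: "SS \<phi> (map (\<lambda>(x, y). (f x y, g x y)) xs) = SS (\<lambda>x y. \<phi> (f x y) (g x y)) xs"
  by (induction xs) (auto simp: SS_def)
lemma SS_concat_map: "SS \<phi> (concat (map f xs)) = (\<Sum>z\<leftarrow>xs. SS \<phi> (f z))"
  by (induction xs) auto
lemma teq_SS: "bar_teq sm e xs ys \<Longrightarrow> bar_form sm e \<phi> \<Longrightarrow> SS \<phi> xs = SS \<phi> ys"
  unfolding bar_teq_def SS_def by blast
lemma teqI: "(\<And>\<phi>. bar_form sm e \<phi> \<Longrightarrow> SS \<phi> xs = SS \<phi> ys) \<Longrightarrow> bar_teq sm e xs ys"
  unfolding bar_teq_def SS_def by blast

lemma lmap_sc: "lmap sm e (\<lambda>x. fa_sc c x)"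
  unfolding lmap_def by (simp add: fa_sc_add fa_sc_sc Ibar_sc mult.commute)

lemma S_mom: assumes "bar_form sm e \<phi>" "E \<in> fa_car" "P \<in> fa_car" "a \<in> fa_car"
  shows "SS \<phi> (mom_rhs E P a) = 1/2 * \<phi> (fa_mul a E) P + 1/2 * \<phi> (fa_mul a P) E
     - 1/2 * \<phi> E (fa_mul P a) - 1/2 * \<phi> P (fa_mul E a)"
  using assms by (simp add: mom_rhs_def bf_sc1)

context FX begin

lemma fdu: "let A = Af sm e; teq = bar_teq sm e in
       (\<forall>a\<in>A. \<forall>b\<in>A. set (F a b) \<subseteq> A \<times> A)
     \<and> (\<forall>a\<in>A. \<forall>a'\<in>A. \<forall>b\<in>A. \<forall>b'\<in>A. bar_eq sm e a a' \<and> bar_eq sm e b b' \<longrightarrow> teq (F a b) (F a' b'))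
     \<and> (\<forall>a\<in>A. \<forall>a'\<in>A. \<forall>b\<in>A. teq (F (fa_add a a') b) (F a b @ F a' b))
     \<and> (\<forall>a\<in>A. \<forall>b\<in>A. \<forall>b'\<in>A. teq (F a (fa_add b b')) (F a b @ F a b'))
     \<and> (\<forall>c. \<forall>a\<in>A. \<forall>b\<in>A. teq (F (fa_sc c a) b) (map (\<lambda>(x, y). (fa_sc c x, y)) (F a b)))
     \<and> (\<forall>c. \<forall>a\<in>A. \<forall>b\<in>A. teq (F a (fa_sc c b)) (map (\<lambda>(x, y). (fa_sc c x, y)) (F a b)))
     \<and> (\<forall>a\<in>A. \<forall>b\<in>A. teq (F a b) (map (\<lambda>(x, y). (fa_neg y, x)) (F b a)))
     \<and> (\<forall>a\<in>A. \<forall>b\<in>A. \<forall>c\<in>A. teq (F a (fa_mul b c))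
          (map (\<lambda>(x, y). (x, fa_mul y c)) (F a b) @ map (\<lambda>(x, y). (fa_mul b x, y)) (F a c)))"
  using fd unfolding fus_dbracket_def by simp

lemmas fdl = fdu[unfolded Let_def]
lemmas fd1 = fdl[THEN conjunct1]
lemmas fd2 = fdl[THEN conjunct2, THEN conjunct1]
lemmas fd3 = fdl[THEN conjunct2, THEN conjunct2, THEN conjunct1]
lemmas fd4 = fdl[THEN conjunct2, THEN conjunct2, THEN conjunct2, THEN conjunct1]
lemmas fd5 = fdl[THEN conjunct2, THEN conjunct2, THEN conjunct2, THEN conjunct2, THEN conjunct1]
lemmas fd6 = fdl[THEN conjunct2, THEN conjunct2, THEN conjunct2, THEN conjunct2, THEN conjunct2, THEN conjunct1]
lemmas fd7 = fdl[THEN conjunct2, THEN conjunct2, THEN conjunct2, THEN conjunct2, THEN conjunct2, THEN conjunct2, THEN conjunct1]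
lemmas fd8 = fdl[THEN conjunct2, THEN conjunct2, THEN conjunct2, THEN conjunct2, THEN conjunct2, THEN conjunct2, THEN conjunct2]

lemma FS_cong: "a \<in> Af sm e \<Longrightarrow> a' \<in> Af sm e \<Longrightarrow> b \<in> Af sm e \<Longrightarrow> b' \<in> Af sm e \<Longrightarrow>
   bar_eq sm e a a' \<Longrightarrow> bar_eq sm e b b' \<Longrightarrow> bar_form sm e \<phi> \<Longrightarrow> SS \<phi> (F a b) = SS \<phi> (F a' b')"
proof -
  assume a: "a \<in> Af sm e" "a' \<in> Af sm e" "b \<in> Af sm e" "b' \<in> Af sm e" "bar_eq sm e a a'" "bar_eq sm e b b'" "bar_form sm e \<phi>"
  then have "bar_teq sm e (F a b) (F a' b')" using fd2 by blast
  then show ?thesis using teq_SS[OF _ a(7)] by simp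
qed
lemma FS_add2: "a \<in> Af sm e \<Longrightarrow> b \<in> Af sm e \<Longrightarrow> b' \<in> Af sm e \<Longrightarrow> bar_form sm e \<phi> \<Longrightarrow>
   SS \<phi> (F a (fa_add b b')) = SS \<phi> (F a b) + SS \<phi> (F a b')"
proof -
  assume a: "a \<in> Af sm e" "b \<in> Af sm e" "b' \<in> Af sm e" "bar_form sm e \<phi>"
  then have "bar_teq sm e (F a (fa_add b b')) (F a b @ F a b')" using fd4 by blast
  then show ?thesis using teq_SS[OF _ a(4)] by simp
qed
lemma FS_sc2: "a \<in> Af sm e \<Longrightarrow> b \<in> Af sm e \<Longrightarrow> bar_form sm e \<phi> \<Longrightarrow>
   SS \<phi> (F a (fa_sc c b)) = SS (\<lambda>x y. \<phi> (fa_sc c x) y) (F a b)"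
proof -
  assume a: "a \<in> Af sm e" "b \<in> Af sm e" "bar_form sm e \<phi>"
  then have "bar_teq sm e (F a (fa_sc c b)) (map (\<lambda>(x, y). (fa_sc c x, y)) (F a b))" using fd6 by blast
  then show ?thesis using teq_SS[OF _ a(3)] SS_map[of \<phi> "\<lambda>x y. fa_sc c x" "\<lambda>x y. y"] by simp
qed
lemma FS_skew: "a \<in> Af sm e \<Longrightarrow> b \<in> Af sm e \<Longrightarrow> bar_form sm e \<phi> \<Longrightarrow>
   SS \<phi> (F a b) = SS (\<lambda>x y. \<phi> (fa_neg y) x) (F b a)"
proof -
  assume a: "a \<in> Af sm e" "b \<in> Af sm e" "bar_form sm e \<phi>"
  then have "bar_teq sm e (F a b) (map (\<lambda>(x, y). (fa_neg y, x)) (F b a))" using fd7 by blast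
  then show ?thesis using teq_SS[OF _ a(3)] SS_map[of \<phi> "\<lambda>x y. fa_neg y" "\<lambda>x y. x"] by simp
qed
lemma FS_leib: "a \<in> Af sm e \<Longrightarrow> b \<in> Af sm e \<Longrightarrow> c \<in> Af sm e \<Longrightarrow> bar_form sm e \<phi> \<Longrightarrow>
   SS \<phi> (F a (fa_mul b c)) = SS (\<lambda>x y. \<phi> x (fa_mul y c)) (F a b) + SS (\<lambda>x y. \<phi> (fa_mul b x) y) (F a c)"
proof -
  assume a: "a \<in> Af sm e" "b \<in> Af sm e" "c \<in> Af sm e" "bar_form sm e \<phi>"
  then have "bar_teq sm e (F a (fa_mul b c)) (map (\<lambda>(x, y). (x, fa_mul y c)) (F a b) @ map (\<lambda>(x, y). (fa_mul b x, y)) (F a c))"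
    using fd8 by blast
  then show ?thesis using teq_SS[OF _ a(4)] SS_map[of \<phi> "\<lambda>x y. x" "\<lambda>x y. fa_mul y c"] SS_map[of \<phi> "\<lambda>x y. fa_mul b x" "\<lambda>x y. y"]
    by simp
qed

definition good :: "('k, 'a) fel \<Rightarrow> ('k, 'a) fel \<Rightarrow> ('k, 'a) fel \<Rightarrow> bool" where
  "good E P a \<longleftrightarrow> (\<forall>\<phi>. bar_form sm e \<phi> \<longrightarrow> SS \<phi> (F P a) = SS \<phi> (mom_rhs E P a))"

lemma ext_good: assumes P: "P \<in> Af sm e" and E: "E \<in> fa_car"
  and g: "\<And>k \<alpha>. gen_ok e k \<alpha> \<Longrightarrow> good E P (gen_el k \<alpha>)"
  and a: "a \<in> Af sm e"
  shows "good E P a"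
proof -
  have cP: "P \<in> fa_car" using P A_car by blast
  have sp: "good E P b" if "b \<in> SP" for b
    using that
  proof (induction rule: Spn.induct)
    case (sgen k \<alpha>) then show ?case by (rule g)
  next
    case (sadd x y)
    have c: "x \<in> fa_car" "y \<in> fa_car" "x \<in> Af sm e" "y \<in> Af sm e" using sadd Spn_A A_car by blast+
    show ?case unfolding good_def
    proof (intro allI impI)
      fix \<phi> assume bf: "bar_form sm e \<phi>"
      have "SS \<phi> (F P (fa_add x y)) = SS \<phi> (F P x) + SS \<phi> (F P y)" by (rule FS_add2[OF P c(3,4) bf])
      also have "\<dots> = SS \<phi> (mom_rhs E P x) + SS \<phi> (mom_rhs E P y)" using sadd.IH bf by (simp add: good_def)
      also have "\<dots> = SS \<phi> (mom_rhs E P (fa_add x y))"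
        using bf c E cP by (simp add: S_mom fa_mul_add_left fa_mul_add_right bf_add1 bf_add2 algebra_simps)
      finally show "SS \<phi> (F P (fa_add x y)) = SS \<phi> (mom_rhs E P (fa_add x y))" .
    qed
  next
    case (ssc x c)
    have cx: "x \<in> fa_car" "x \<in> Af sm e" using ssc Spn_A A_car by blast+
    show ?case unfolding good_def
    proof (intro allI impI)
      fix \<phi> assume bf: "bar_form sm e \<phi>"
      have bf': "bar_form sm e (\<lambda>x y. \<phi> (fa_sc c x) y)" by (rule bf_comp[OF bf lmap_sc lmap_id])
      have "SS \<phi> (F P (fa_sc c x)) = SS (\<lambda>x y. \<phi> (fa_sc c x) y) (F P x)" by (rule FS_sc2[OF P cx(2) bf])
      also have "\<dots> = SS (\<lambda>x y. \<phi> (fa_sc c x) y) (mom_rhs E P x)" using ssc.IH bf' by (simp add: good_def)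
      also have "\<dots> = SS \<phi> (mom_rhs E P (fa_sc c x))"
        using bf bf' cx E cP by (simp add: S_mom fa_mul_sc_left fa_mul_sc_right bf_sc1 bf_sc2 algebra_simps)
      finally show "SS \<phi> (F P (fa_sc c x)) = SS \<phi> (mom_rhs E P (fa_sc c x))" .
    qed
  next
    case (smul x y)
    have c: "x \<in> fa_car" "y \<in> fa_car" "x \<in> Af sm e" "y \<in> Af sm e" using smul Spn_A A_car by blast+
    show ?case unfolding good_def
    proof (intro allI impI)
      fix \<phi> assume bf: "bar_form sm e \<phi>"
      have bf1: "bar_form sm e (\<lambda>u v. \<phi> u (fa_mul v y))" by (rule bf_comp[OF bf lmap_id lmap_mulr[OF c(2)]])
      have bf2: "bar_form sm e (\<lambda>u v. \<phi> (fa_mul x u) v)" by (rule bf_comp[OF bf lmap_mull[OF c(1)] lmap_id])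
      have "SS \<phi> (F P (fa_mul x y)) = SS (\<lambda>u v. \<phi> u (fa_mul v y)) (F P x) + SS (\<lambda>u v. \<phi> (fa_mul x u) v) (F P y)"
        by (rule FS_leib[OF P c(3,4) bf])
      also have "\<dots> = SS (\<lambda>u v. \<phi> u (fa_mul v y)) (mom_rhs E P x) + SS (\<lambda>u v. \<phi> (fa_mul x u) v) (mom_rhs E P y)"
        using smul.IH bf1 bf2 by (simp add: good_def)
      also have "\<dots> = SS \<phi> (mom_rhs E P (fa_mul x y))"
        using bf bf1 bf2 c E cP by (simp add: S_mom fa_mul_assoc algebra_simps)
      finally show "SS \<phi> (F P (fa_mul x y)) = SS \<phi> (mom_rhs E P (fa_mul x y))" .
    qed
  qed
  obtain b where b: "b \<in> SP" "bar_eq sm e a b" using decomp[OF a] by blast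
  have cb: "b \<in> Af sm e" "b \<in> fa_car" using b Spn_A A_car by blast+
  have ca: "a \<in> fa_car" using a A_car by blast
  show ?thesis unfolding good_def
  proof (intro allI impI)
    fix \<phi> assume bf: "bar_form sm e \<phi>"
    have "SS \<phi> (F P a) = SS \<phi> (F P b)" by (rule FS_cong[OF P P a cb(1) beq_refl b(2) bf])
    also have "\<dots> = SS \<phi> (mom_rhs E P b)" using sp[OF b(1)] bf by (simp add: good_def)
    also have "\<dots> = SS \<phi> (mom_rhs E P a)"
    proof -
      have m1: "bar_eq sm e (fa_mul b E) (fa_mul a E)" "bar_eq sm e (fa_mul b P) (fa_mul a P)"
        using b(2) ca cb E cP by (simp_all add: beq_mul beq_sym)
      have m2: "bar_eq sm e (fa_mul P b) (fa_mul P a)" "bar_eq sm e (fa_mul E b) (fa_mul E a)"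
        using b(2) ca cb E cP by (simp_all add: beq_mul beq_sym)
      show ?thesis using bf ca cb E cP
        by (simp add: S_mom bf_beq1[OF bf m1(1)] bf_beq1[OF bf m1(2)] bf_beq2[OF bf m2(1)] bf_beq2[OF bf m2(2)])
    qed
    finally show "SS \<phi> (F P a) = SS \<phi> (mom_rhs E P a)" .
  qed
qed

end

lemma G_add_beq: "bar_eq sm e (fa_mul (fa_mul p (G (x + x'))) q) (fa_add (fa_mul (fa_mul p (G x)) q) (fa_mul (fa_mul p (G x')) q))"
  if "p \<in> fa_car" "q \<in> fa_car"
proof -
  have "bar_eq sm e (fa_mul (fa_mul p (G (x + x'))) q) (fa_mul (fa_mul p (fa_add (G x) (G x'))) q)"
    by (rule beq_mul[OF beq_mul[OF beq_refl rel_Gadd] beq_refl]) (simp_all add: that)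
  then show ?thesis by (simp add: fa_mul_add_left fa_mul_add_right)
qed
lemma G_sc_beq: "bar_eq sm e (fa_mul (fa_mul p (G (sm c x))) q) (fa_sc c (fa_mul (fa_mul p (G x)) q))"
  if "p \<in> fa_car" "q \<in> fa_car"
proof -
  have "bar_eq sm e (fa_mul (fa_mul p (G (sm c x))) q) (fa_mul (fa_mul p (fa_sc c (G x))) q)"
    by (rule beq_mul[OF beq_mul[OF beq_refl rel_Gsc] beq_refl]) (simp_all add: that)
  then show ?thesis by (simp add: fa_mul_sc_left fa_mul_sc_right)
qed

lemma bilin_G: assumes bf: "bar_form sm e \<chi>" and c: "p \<in> fa_car" "q \<in> fa_car" "p' \<in> fa_car" "q' \<in> fa_car"
  shows "bilin_form sm (\<lambda>x y. \<chi> (fa_mul (fa_mul p (G x)) q) (fa_mul (fa_mul p' (G y)) q'))"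
  unfolding bilin_form_def
proof (intro conjI allI)
  fix x x' y
  show "\<chi> (fa_mul (fa_mul p (G (x + x'))) q) (fa_mul (fa_mul p' (G y)) q') =
    \<chi> (fa_mul (fa_mul p (G x)) q) (fa_mul (fa_mul p' (G y)) q') + \<chi> (fa_mul (fa_mul p (G x')) q) (fa_mul (fa_mul p' (G y)) q')"
    using bf_beq1[OF bf G_add_beq[OF c(1,2)]] bf_add1[OF bf] c by simp
next
  fix x y y'
  show "\<chi> (fa_mul (fa_mul p (G x)) q) (fa_mul (fa_mul p' (G (y + y'))) q') =
    \<chi> (fa_mul (fa_mul p (G x)) q) (fa_mul (fa_mul p' (G y)) q') + \<chi> (fa_mul (fa_mul p (G x)) q) (fa_mul (fa_mul p' (G y')) q')"
    using bf_beq2[OF bf G_add_beq[OF c(3,4)]] bf_add2[OF bf] c by simp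
next
  fix cc x y
  show "\<chi> (fa_mul (fa_mul p (G (sm cc x))) q) (fa_mul (fa_mul p' (G y)) q') = cc * \<chi> (fa_mul (fa_mul p (G x)) q) (fa_mul (fa_mul p' (G y)) q')"
    using bf_beq1[OF bf G_sc_beq[OF c(1,2)]] bf_sc1[OF bf] c by simp
next
  fix cc x y
  show "\<chi> (fa_mul (fa_mul p (G x)) q) (fa_mul (fa_mul p' (G (sm cc y))) q') = cc * \<chi> (fa_mul (fa_mul p (G x)) q) (fa_mul (fa_mul p' (G y)) q')"
    using bf_beq2[OF bf G_sc_beq[OF c(3,4)]] bf_sc2[OF bf] c by simp
qed

lemma epm_car[simp]: "eplus k \<in> fa_car" "eminus k \<in> fa_car"
  by (cases k; simp add: eplus_def eminus_def)+

context FX begin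

lemma qh_br: "s \<in> {1..N} \<Longrightarrow> tens_eq sm (br (\<Phi> s) a)
          [ (sm (1/2) (a * e s), \<Phi> s), (sm (-1/2) (e s), \<Phi> s * a),
            (sm (1/2) (a * \<Phi> s), e s), (sm (-1/2) (\<Phi> s), e s * a) ]"
  using qh unfolding quasi_hamiltonian_def by blast

lemma ind_QH: assumes bf: "bar_form sm e \<chi>" and s: "s \<in> {1..N}"
  shows "SS \<chi> (ind_br br k1 (\<Phi> s) k2 \<beta>) =
    1/2 * \<chi> (fa_mul (fa_mul (eplus k2) (G (\<beta> * e s))) (eminus k1)) (fa_mul (fa_mul (eplus k1) (G (\<Phi> s))) (eminus k2))
  - 1/2 * \<chi> (fa_mul (fa_mul (eplus k2) (G (e s))) (eminus k1)) (fa_mul (fa_mul (eplus k1) (G (\<Phi> s * \<beta>))) (eminus k2))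
  + 1/2 * \<chi> (fa_mul (fa_mul (eplus k2) (G (\<beta> * \<Phi> s))) (eminus k1)) (fa_mul (fa_mul (eplus k1) (G (e s))) (eminus k2))
  - 1/2 * \<chi> (fa_mul (fa_mul (eplus k2) (G (\<Phi> s))) (eminus k1)) (fa_mul (fa_mul (eplus k1) (G (e s * \<beta>))) (eminus k2))"
proof -
  define \<psi> where "\<psi> = (\<lambda>x y. \<chi> (fa_mul (fa_mul (eplus k2) (G x)) (eminus k1)) (fa_mul (fa_mul (eplus k1) (G y)) (eminus k2)))"
  have bl: "bilin_form sm \<psi>" unfolding \<psi>_def by (rule bilin_G[OF bf]) simp_all
  have "SS \<chi> (ind_br br k1 (\<Phi> s) k2 \<beta>) = (\<Sum>(x, y)\<leftarrow>br (\<Phi> s) \<beta>. \<psi> x y)"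
    by (simp add: ind_br_def \<psi>_def SS_def comp_def split_def)
  also have "\<dots> = (\<Sum>(x, y)\<leftarrow>[ (sm (1/2) (\<beta> * e s), \<Phi> s), (sm (-1/2) (e s), \<Phi> s * \<beta>),
            (sm (1/2) (\<beta> * \<Phi> s), e s), (sm (-1/2) (\<Phi> s), e s * \<beta>) ]. \<psi> x y)"
    using qh_br[OF s, of \<beta>] bl unfolding tens_eq_def by blast
  also have "\<dots> = 1/2 * \<psi> (\<beta> * e s) (\<Phi> s) - 1/2 * \<psi> (e s) (\<Phi> s * \<beta>) + 1/2 * \<psi> (\<beta> * \<Phi> s) (e s) - 1/2 * \<psi> (\<Phi> s) (e s * \<beta>)"
    using bl unfolding bilin_form_def by simp
  finally show ?thesis unfolding \<psi>_def .
qed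

end

context FX begin

lemma Phi_sand: "s \<in> {1..N} \<Longrightarrow> \<Phi> s = e s * \<Phi> s * e s"
  using qh unfolding quasi_hamiltonian_def by blast

lemma phi_facts: assumes "s \<in> {1..N}"
  shows "e s * \<Phi> s = \<Phi> s" "\<Phi> s * e s = \<Phi> s" "e s * (\<Phi> s * x) = \<Phi> s * x" "\<Phi> s * (e s * x) = \<Phi> s * x"
proof -
  show 1: "e s * \<Phi> s = \<Phi> s" by (rule sw3[OF Phi_sand[OF assms] e_idem[OF assms]])
  show 2: "\<Phi> s * e s = \<Phi> s" by (rule sw4[OF Phi_sand[OF assms] e_idem[OF assms]])
  show "e s * (\<Phi> s * x) = \<Phi> s * x" using assoc_rule[OF 1] .
  show "\<Phi> s * (e s * x) = \<Phi> s * x" using assoc_rule[OF 2] .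
qed

lemma phi_orth: assumes "s \<in> {1..N}" "t \<in> {1..N}" "t \<noteq> s"
  shows "e t * \<Phi> s = 0" "\<Phi> s * e t = 0" "e t * (\<Phi> s * x) = 0" "\<Phi> s * (e t * x) = 0"
proof -
  show 1: "e t * \<Phi> s = 0" by (rule sw1[OF Phi_sand[OF assms(1)] e_orth[OF assms(2,1,3)]])
  show 2: "\<Phi> s * e t = 0" by (rule sw2[OF Phi_sand[OF assms(1)] e_orth[OF assms(1,2) assms(3)[symmetric]]])
  show "e t * (\<Phi> s * x) = 0" using assoc_rule[OF 1] by simp
  show "\<Phi> s * (e t * x) = 0" using assoc_rule[OF 2] by simp
qed

lemma s_facts: assumes "3 \<le> s" "s \<le> N"
  shows "e s * e s = e s" "e s * e 1 = 0" "e 1 * e s = 0" "e s * e 2 = 0" "e 2 * e s = 0"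
    "e s * (e s * x) = e s * x" "e s * (e 1 * x) = 0" "e 1 * (e s * x) = 0" "e s * (e 2 * x) = 0" "e 2 * (e s * x) = 0"
proof -
  have r: "s \<in> {1..N}" "1 \<in> {1..N}" "2 \<in> {1..N}" using assms N2 by auto
  have n: "s \<noteq> 1" "s \<noteq> 2" using assms by auto
  show 1: "e s * e s = e s" by (rule e_idem[OF r(1)])
  show 2: "e s * e 1 = 0" by (rule e_orth[OF r(1,2) n(1)])
  show 3: "e 1 * e s = 0" by (rule e_orth[OF r(2,1) n(1)[symmetric]])
  show 4: "e s * e 2 = 0" by (rule e_orth[OF r(1,3) n(2)])
  show 5: "e 2 * e s = 0" by (rule e_orth[OF r(3,1) n(2)[symmetric]])
  show "e s * (e s * x) = e s * x" using assoc_rule[OF 1] .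
  show "e s * (e 1 * x) = 0" using assoc_rule[OF 2] by simp
  show "e 1 * (e s * x) = 0" using assoc_rule[OF 3] by simp
  show "e s * (e 2 * x) = 0" using assoc_rule[OF 4] by simp
  show "e 2 * (e s * x) = 0" using assoc_rule[OF 5] by simp
qed

lemma beta_facts:
  assumes "gen_ok e k \<beta>"
  shows "k = KT \<Longrightarrow> e 2 * \<beta> = 0 \<and> \<beta> * e 2 = 0 \<and> e 2 * (\<beta> * x) = 0 \<and> \<beta> * (e 2 * x) = 0"
    and "k = KU \<Longrightarrow> e 2 * \<beta> = \<beta> \<and> \<beta> * e 2 = 0 \<and> e 2 * (\<beta> * x) = \<beta> * x \<and> \<beta> * (e 2 * x) = 0
           \<and> e 1 * \<beta> = 0 \<and> e 1 * (\<beta> * x) = 0"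
    and "k = KV \<Longrightarrow> e 2 * \<beta> = 0 \<and> \<beta> * e 2 = \<beta> \<and> e 2 * (\<beta> * x) = 0 \<and> \<beta> * (e 2 * x) = \<beta> * x
           \<and> \<beta> * e 1 = 0 \<and> \<beta> * (e 1 * x) = 0"
    and "k = KW \<Longrightarrow> e 2 * \<beta> = \<beta> \<and> \<beta> * e 2 = \<beta> \<and> e 2 * (\<beta> * x) = \<beta> * x \<and> \<beta> * (e 2 * x) = \<beta> * x
           \<and> e 1 * \<beta> = 0 \<and> e 1 * (\<beta> * x) = 0 \<and> \<beta> * e 1 = 0 \<and> \<beta> * (e 1 * x) = 0"
proof -
  have u: "e 1 * \<beta> = 0" if "e 2 * \<beta> = \<beta>"
    by (metis that e12 mult.assoc mult_zero_left)
  have v: "\<beta> * e 1 = 0" if "\<beta> * e 2 = \<beta>"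
    by (metis that e21 mult.assoc mult_zero_right)
  show "k = KT \<Longrightarrow> e 2 * \<beta> = 0 \<and> \<beta> * e 2 = 0 \<and> e 2 * (\<beta> * x) = 0 \<and> \<beta> * (e 2 * x) = 0"
    using gen_facts(1)[of \<beta>] assms by (auto simp: assoc_rule)
  show "k = KU \<Longrightarrow> e 2 * \<beta> = \<beta> \<and> \<beta> * e 2 = 0 \<and> e 2 * (\<beta> * x) = \<beta> * x \<and> \<beta> * (e 2 * x) = 0
           \<and> e 1 * \<beta> = 0 \<and> e 1 * (\<beta> * x) = 0"
    using gen_facts(2)[of \<beta>] assms u by (auto simp: assoc_rule)
  show "k = KV \<Longrightarrow> e 2 * \<beta> = 0 \<and> \<beta> * e 2 = \<beta> \<and> e 2 * (\<beta> * x) = 0 \<and> \<beta> * (e 2 * x) = \<beta> * x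
           \<and> \<beta> * e 1 = 0 \<and> \<beta> * (e 1 * x) = 0"
    using gen_facts(3)[of \<beta>] assms v by (auto simp: assoc_rule)
  show "k = KW \<Longrightarrow> e 2 * \<beta> = \<beta> \<and> \<beta> * e 2 = \<beta> \<and> e 2 * (\<beta> * x) = \<beta> * x \<and> \<beta> * (e 2 * x) = \<beta> * x
           \<and> e 1 * \<beta> = 0 \<and> e 1 * (\<beta> * x) = 0 \<and> \<beta> * e 1 = 0 \<and> \<beta> * (e 1 * x) = 0"
    using gen_facts(4)[of \<beta>] assms u v by (auto simp: assoc_rule)
qed

end

context FX begin

lemmas GI0 = toMI[where e=e and i=1] toMI[where e=e and i=2]
lemmas GI = GI0 GI0[simplified]

lemma one_in: "1 \<in> {1..N}" "2 \<in> {1..N}" using N2 by auto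

lemma part1_gen: assumes s: "3 \<le> s" "s \<le> N" and g: "gen_ok e k \<beta>"
  shows "good (G (e s)) (gen_el KT (\<Phi> s)) (gen_el k \<beta>)"
proof -
  have sN: "s \<in> {1..N}" using s by auto
  have n: "(1::nat) \<noteq> s" "(2::nat) \<noteq> s" using s by auto
  note po = phi_orth[OF sN one_in(1) n(1)] phi_orth[OF sN one_in(2) n(2)]
  note pf = phi_facts[OF sN]
  note sf = s_facts[OF s]
  have gs: "gen_ok e KT (\<Phi> s)"
    unfolding gen_ok_def epsA_def by (simp add: ring_distribs po mult.assoc)
  show ?thesis unfolding good_def
  proof (intro allI impI)
    fix \<phi> assume bf: "bar_form sm e \<phi>"
    have "SS \<phi> (F (gen_el KT (\<Phi> s)) (gen_el k \<beta>)) = SS \<phi> (ind_br br KT (\<Phi> s) k \<beta>) + SS \<phi> (fus_br e KT (\<Phi> s) k \<beta>)"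
      using gens gs g teq_SS[OF _ bf] by (metis SS_append)
    also have "\<dots> = SS \<phi> (mom_rhs (G (e s)) (gen_el KT (\<Phi> s)) (gen_el k \<beta>))"
      unfolding ind_QH[OF bf sN] S_mom[OF bf car_G gen_car gen_car]
      using beta_facts[OF g]
      apply (cases k)
      apply (simp_all add: fa_mul_sc_right fa_mul_sc_left fa_neg_sc fa_sc_sc bf_sc1[OF bf] bf_sc2[OF bf]
          eplus_def eminus_def gen_el_def fus_br_def TrE1_def TrE2_def Let_def)
      apply (simp_all only: GI)
      apply (simp_all add: Msimps phiM[OF bf eokE] Q_zero1[OF bf] Q_zero2[OF bf]
          po pf sf po[simplified] pf[simplified] sf[simplified])
      done
    finally show "SS \<phi> (F (gen_el KT (\<Phi> s)) (gen_el k \<beta>)) = SS \<phi> (mom_rhs (G (e s)) (gen_el KT (\<Phi> s)) (gen_el k \<beta>))" .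
  qed
qed

end

context FX begin

lemma bphi:
  "\<beta> * e 2 = 0 \<Longrightarrow> \<beta> * \<Phi> 2 = 0" "\<beta> * e 2 = 0 \<Longrightarrow> \<beta> * (\<Phi> 2 * x) = 0"
  "e 2 * \<beta> = 0 \<Longrightarrow> \<Phi> 2 * \<beta> = 0" "e 2 * \<beta> = 0 \<Longrightarrow> \<Phi> 2 * (\<beta> * x) = 0"
  "\<beta> * e 2 = \<beta> \<Longrightarrow> \<beta> * \<Phi> 1 = 0" "\<beta> * e 2 = \<beta> \<Longrightarrow> \<beta> * (\<Phi> 1 * x) = 0"
  "e 2 * \<beta> = \<beta> \<Longrightarrow> \<Phi> 1 * \<beta> = 0" "e 2 * \<beta> = \<beta> \<Longrightarrow> \<Phi> 1 * (\<beta> * x) = 0"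
proof -
  have n: "(1::nat) \<noteq> 2" "(2::nat) \<noteq> 1" by auto
  note pf = phi_facts[OF one_in(2)] and po = phi_orth[OF one_in(1) one_in(2) n(2)]
  have a1: "\<beta> * \<Phi> 2 = (\<beta> * e 2) * \<Phi> 2" by (simp add: mult.assoc pf(1))
  have a2: "\<Phi> 2 * \<beta> = \<Phi> 2 * (e 2 * \<beta>)" by (simp add: mult.assoc[symmetric] pf(2))
  show b1: "\<beta> * e 2 = 0 \<Longrightarrow> \<beta> * \<Phi> 2 = 0" using a1 by simp
  show "\<beta> * e 2 = 0 \<Longrightarrow> \<beta> * (\<Phi> 2 * x) = 0" using b1 by (simp add: mult.assoc[symmetric])
  show b2: "e 2 * \<beta> = 0 \<Longrightarrow> \<Phi> 2 * \<beta> = 0" using a2 by simp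
  show "e 2 * \<beta> = 0 \<Longrightarrow> \<Phi> 2 * (\<beta> * x) = 0" using b2 by (simp add: mult.assoc[symmetric])
  show b3: "\<beta> * e 2 = \<beta> \<Longrightarrow> \<beta> * \<Phi> 1 = 0"
  proof -
    assume h: "\<beta> * e 2 = \<beta>"
    have "\<beta> * \<Phi> 1 = (\<beta> * e 2) * \<Phi> 1" using h by simp
    also have "\<dots> = \<beta> * (e 2 * \<Phi> 1)" by (simp add: mult.assoc)
    finally show ?thesis using po(1) by simp
  qed
  show "\<beta> * e 2 = \<beta> \<Longrightarrow> \<beta> * (\<Phi> 1 * x) = 0" using b3 by (simp add: mult.assoc[symmetric])
  show b4: "e 2 * \<beta> = \<beta> \<Longrightarrow> \<Phi> 1 * \<beta> = 0"
  proof -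
    assume h: "e 2 * \<beta> = \<beta>"
    have "\<Phi> 1 * \<beta> = \<Phi> 1 * (e 2 * \<beta>)" using h by simp
    also have "\<dots> = (\<Phi> 1 * e 2) * \<beta>" by (simp add: mult.assoc)
    finally show ?thesis using po(2) by simp
  qed
  show "e 2 * \<beta> = \<beta> \<Longrightarrow> \<Phi> 1 * (\<beta> * x) = 0" using b4 by (simp add: mult.assoc[symmetric])
qed

lemma bf_neg_swap: "bar_form sm e \<phi> \<Longrightarrow> bar_form sm e (\<lambda>x y. \<phi> (fa_neg y) x)"
  using bf_swap[OF bf_comp[OF _ lmap_neg lmap_id]] by blast

lemma part2_gen: assumes g: "gen_ok e k \<beta>"
  shows "good (G (e 1)) (fa_mul (gen_el KT (\<Phi> 1)) (gen_el KW (\<Phi> 2))) (gen_el k \<beta>)"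
proof -
  have n: "(1::nat) \<noteq> 2" "(2::nat) \<noteq> 1" by auto
  note po = phi_orth[OF one_in(1) one_in(2) n(2)] phi_orth[OF one_in(2) one_in(1) n(1)]
  note pf = phi_facts[OF one_in(1)] phi_facts[OF one_in(2)]
  have gT: "gen_ok e KT (\<Phi> 1)"
    unfolding gen_ok_def epsA_def by (simp add: ring_distribs po po[simplified] mult.assoc)
  have gW: "gen_ok e KW (\<Phi> 2)"
    unfolding gen_ok_def using Phi_sand[OF one_in(2)] by simp
  define T :: "('k, 'a) fel" where "T = gen_el KT (\<Phi> 1)"
  define W :: "('k, 'a) fel" where "W = gen_el KW (\<Phi> 2)"
  define a :: "('k, 'a) fel" where "a = gen_el k \<beta>"
  have AT: "T \<in> Af sm e" "W \<in> Af sm e" "a \<in> Af sm e" using gen_in_A gT gW g by (simp_all add: T_def W_def a_def)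
  have cT: "T \<in> fa_car" "W \<in> fa_car" "a \<in> fa_car" by (simp_all add: T_def W_def a_def)
  have ATW: "fa_mul T W \<in> Af sm e" using A_mul AT by blast
  show ?thesis unfolding good_def T_def[symmetric] W_def[symmetric] a_def[symmetric]
  proof (intro allI impI)
    fix \<phi> assume bf: "bar_form sm e \<phi>"
    define \<psi> where "\<psi> = (\<lambda>x y. \<phi> (fa_neg y) x)"
    have bpsi: "bar_form sm e \<psi>" unfolding \<psi>_def by (rule bf_neg_swap[OF bf])
    define \<chi>1 where "\<chi>1 = (\<lambda>x y. \<psi> x (fa_mul y W))"
    define \<chi>2 where "\<chi>2 = (\<lambda>x y. \<psi> (fa_mul T x) y)"
    have b1: "bar_form sm e \<chi>1" unfolding \<chi>1_def by (rule bf_comp[OF bpsi lmap_id lmap_mulr[OF cT(2)]])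
    have b2: "bar_form sm e \<chi>2" unfolding \<chi>2_def by (rule bf_comp[OF bpsi lmap_mull[OF cT(1)] lmap_id])
    define \<chi>1' where "\<chi>1' = (\<lambda>x y. \<phi> (fa_neg (fa_mul x W)) (fa_neg y))"
    define \<chi>2' where "\<chi>2' = (\<lambda>x y. \<phi> (fa_neg x) (fa_mul T (fa_neg y)))"
    have b1': "bar_form sm e \<chi>1'" unfolding \<chi>1'_def
      by (rule bf_comp[OF bf lmap_comp[OF lmap_neg lmap_mulr[OF cT(2)]] lmap_neg])
    have b2': "bar_form sm e \<chi>2'" unfolding \<chi>2'_def
      by (rule bf_comp[OF bf lmap_neg lmap_comp[OF lmap_mull[OF cT(1)] lmap_neg]])
    have e1: "(\<lambda>x y. \<chi>1 (fa_neg y) x) = \<chi>1'" by (simp add: \<chi>1_def \<chi>1'_def \<psi>_def)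
    have e2: "(\<lambda>x y. \<chi>2 (fa_neg y) x) = \<chi>2'" by (simp add: \<chi>2_def \<chi>2'_def \<psi>_def)
    have "SS \<phi> (F (fa_mul T W) a) = SS \<psi> (F a (fa_mul T W))"
      unfolding \<psi>_def by (rule FS_skew[OF ATW AT(3) bf])
    also have "\<dots> = SS \<chi>1 (F a T) + SS \<chi>2 (F a W)"
      unfolding \<chi>1_def \<chi>2_def by (rule FS_leib[OF AT(3) AT(1) AT(2) bpsi])
    also have "\<dots> = SS \<chi>1' (F T a) + SS \<chi>2' (F W a)"
      using FS_skew[OF AT(3) AT(1) b1] FS_skew[OF AT(3) AT(2) b2] e1 e2 by simp
    also have "\<dots> = SS \<chi>1' (ind_br br KT (\<Phi> 1) k \<beta>) + SS \<chi>1' (fus_br e KT (\<Phi> 1) k \<beta>)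
                   + SS \<chi>2' (ind_br br KW (\<Phi> 2) k \<beta>) + SS \<chi>2' (fus_br e KW (\<Phi> 2) k \<beta>)"
      using gens gT gW g teq_SS[OF _ b1'] teq_SS[OF _ b2'] unfolding T_def W_def a_def by (metis SS_append add.assoc)
    also have "\<dots> = SS \<phi> (mom_rhs (G (e 1)) (fa_mul T W) a)"
      unfolding ind_QH[OF b1' one_in(1)] ind_QH[OF b2' one_in(2)] S_mom[OF bf car_G car_mul[OF cT(1,2)] cT(3)]
      unfolding \<chi>1'_def \<chi>2'_def T_def W_def a_def
      using beta_facts[OF g]
      apply (cases k)
      apply (simp_all add: fa_mul_sc_right fa_mul_sc_left fa_neg_sc fa_sc_sc bf_sc1[OF bf] bf_sc2[OF bf]
          eplus_def eminus_def gen_el_def fus_br_def TrE1_def TrE2_def Let_def)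
      apply (simp_all only: GI)
      apply (simp_all add: Msimps phiM[OF bf eokE] Q_zero1[OF bf] Q_zero2[OF bf]
          po pf po[simplified] pf[simplified] bphi bphi[simplified])
      done
    finally show "SS \<phi> (F (fa_mul T W) a) = SS \<phi> (mom_rhs (G (e 1)) (fa_mul T W) a)" .
  qed
qed

end

context FX begin

lemma transfer: assumes P: "P \<in> Af sm e" "P' \<in> Af sm e" "bar_eq sm e P P'" and E: "E \<in> fa_car"
  and g: "good E P' a" and a: "a \<in> Af sm e"
  shows "bar_teq sm e (F P a) (mom_rhs E P a)"
proof (rule teqI)
  fix \<phi> assume bf: "bar_form sm e \<phi>"
  have c: "P \<in> fa_car" "P' \<in> fa_car" "a \<in> fa_car" using P a A_car by auto
  have m: "bar_eq sm e (fa_mul a P) (fa_mul a P')" "bar_eq sm e (fa_mul P a) (fa_mul P' a)"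
    using P(3) c E by (simp_all add: beq_mul)
  have "SS \<phi> (F P a) = SS \<phi> (F P' a)" by (rule FS_cong[OF P(1,2) a a P(3) beq_refl bf])
  also have "\<dots> = SS \<phi> (mom_rhs E P' a)" using g bf by (simp add: good_def)
  also have "\<dots> = SS \<phi> (mom_rhs E P a)"
    using bf c E by (simp add: S_mom bf_beq1[OF bf m(1)] bf_beq2[OF bf m(2)] bf_beq1[OF bf P(3)] bf_beq2[OF bf P(3)])
  finally show "SS \<phi> (F P a) = SS \<phi> (mom_rhs E P a)" .
qed

lemma TrPhi_beq: assumes "s \<in> {1..N}" "s \<noteq> 2"
  shows "bar_eq sm e (TrPhi e \<Phi> s) (gen_el KT (\<Phi> s))"
proof -
  have n: "(2::nat) \<noteq> s" using assms by auto
  note po = phi_orth[OF assms(1) one_in(2) n]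
  have 1: "bar_eq sm e (TrPhi e \<Phi> s) (M e ([LG (epsA e)] @ [LG (\<Phi> s)] @ [LG (epsA e)]))"
    unfolding TrPhi_def using assms(2) beq_MMM[OF eps_M eps_M eps_car eps_car, where b="[LG (\<Phi> s)]"]
    by (simp add: toM[where e=e])
  have 2: "bar_eq sm e (M e ([LG (epsA e)] @ [LG (\<Phi> s)] @ [LG (epsA e)])) (M e [LG (\<Phi> s)])"
    by (rule M_beq_nf[OF eokE]) (simp_all add: Msimps po po[simplified])
  show ?thesis using beq_trans[OF 1 2] by (simp add: gen_M)
qed

lemma gok_s: assumes "s \<in> {1..N}" "s \<noteq> 2" shows "gen_ok e KT (\<Phi> s)"
proof -
  have n: "(2::nat) \<noteq> s" using assms by auto
  note po = phi_orth[OF assms(1) one_in(2) n]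
  show ?thesis unfolding gen_ok_def epsA_def by (simp add: ring_distribs po mult.assoc)
qed

lemma final1: assumes "3 \<le> s" "s \<le> N" "a \<in> Af sm e"
  shows "bar_teq sm e (F (TrPhi e \<Phi> s) a) (mom_rhs (G (e s)) (TrPhi e \<Phi> s) a)"
proof -
  have sN: "s \<in> {1..N}" "s \<noteq> 2" using assms by auto
  have A': "gen_el KT (\<Phi> s) \<in> Af sm e" using gen_in_A[OF gok_s[OF sN]] .
  have g: "good (G (e s)) (gen_el KT (\<Phi> s)) a"
    by (rule ext_good[OF A' car_G _ assms(3)]) (rule part1_gen[OF assms(1,2)])
  have cT: "TrPhi e \<Phi> s \<in> fa_car" by (simp add: TrPhi_def)
  have A: "TrPhi e \<Phi> s \<in> Af sm e" by (rule A_beq_closed[OF A' cT beq_sym[OF TrPhi_beq[OF sN]]])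
  show ?thesis by (rule transfer[OF A A' TrPhi_beq[OF sN] car_G g assms(3)])
qed

lemma final2: assumes "a \<in> Af sm e"
  shows "bar_teq sm e (F (Phif1 e \<Phi>) a) (mom_rhs (G (e 1)) (Phif1 e \<Phi>) a)"
proof -
  have s1: "(1::nat) \<in> {1..N}" "(1::nat) \<noteq> 2" using one_in by auto
  have gW: "gen_ok e KW (\<Phi> 2)" unfolding gen_ok_def using Phi_sand[OF one_in(2)] by simp
  have AT: "gen_el KT (\<Phi> 1) \<in> Af sm e" using gen_in_A[OF gok_s[OF s1]] .
  have AW: "gen_el KW (\<Phi> 2) \<in> Af sm e" using gen_in_A[OF gW] .
  have A': "fa_mul (gen_el KT (\<Phi> 1)) (gen_el KW (\<Phi> 2)) \<in> Af sm e" using A_mul[OF AT AW] .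
  have g: "good (G (e 1)) (fa_mul (gen_el KT (\<Phi> 1)) (gen_el KW (\<Phi> 2))) a"
    by (rule ext_good[OF A' car_G _ assms]) (rule part2_gen)
  have W: "TrPhi e \<Phi> 2 = gen_el KW (\<Phi> 2)" by (simp add: TrPhi_def gen_el_def eplus_def eminus_def)
  have b: "bar_eq sm e (Phif1 e \<Phi>) (fa_mul (gen_el KT (\<Phi> 1)) (gen_el KW (\<Phi> 2)))"
    unfolding Phif1_def W by (rule beq_mul[OF TrPhi_beq[OF s1] beq_refl]) simp_all
  have c: "Phif1 e \<Phi> \<in> fa_car" by (simp add: Phif1_def TrPhi_def)
  have A: "Phif1 e \<Phi> \<in> Af sm e" by (rule A_beq_closed[OF A' c beq_sym[OF b]])
  show ?thesis by (rule transfer[OF A A' b car_G g assms])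
qed

end

theorem lemma2p21:
  fixes sm :: "'k::field_char_0 \<Rightarrow> 'a::ring_1 \<Rightarrow> 'a" and e :: "nat \<Rightarrow> 'a" and N :: nat
    and br :: "'a \<Rightarrow> 'a \<Rightarrow> ('a \<times> 'a) list" and \<Phi> :: "nat \<Rightarrow> 'a"
    and F :: "('k, 'a) fel \<Rightarrow> ('k, 'a) fel \<Rightarrow> (('k, 'a) fel \<times> ('k, 'a) fel) list"
  assumes "N \<ge> 2"
    and "base_ok sm e N"
    and "quasi_hamiltonian sm e N br \<Phi>"
    and "fus_dbracket sm e F"
    and "\<forall>k1 \<alpha> k2 \<beta>. gen_ok e k1 \<alpha> \<and> gen_ok e k2 \<beta> \<longrightarrow>
           bar_teq sm e (F (gen_el k1 \<alpha>) (gen_el k2 \<beta>)) (ind_br br k1 \<alpha> k2 \<beta> @ fus_br e k1 \<alpha> k2 \<beta>)"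
  shows "(\<forall>s a. 3 \<le> s \<and> s \<le> N \<and> a \<in> Af sm e \<longrightarrow>
            bar_teq sm e (F (TrPhi e \<Phi> s) a) (mom_rhs (G (e s)) (TrPhi e \<Phi> s) a))
       \<and> (\<forall>a\<in>Af sm e. bar_teq sm e (F (Phif1 e \<Phi>) a) (mom_rhs (G (e 1)) (Phif1 e \<Phi>) a))"
proof -
  interpret FX sm e N br \<Phi> F using assms by unfold_locales
  show ?thesis using final1 final2 by blast
qed


end
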